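(* Let $X$ be a finite set and let $C_i,C_j\in\mathcal C_X$ be distinct. Then $C_i$ and $C_j$ cover a common element $w$ of $S(X)$ if and only if $C_j$ can be obtained from $C_i$ by a nearest neighbor interchange over some internal edge $\alpha$ of $C_i$.
   Context: An $X$-tree is a pair $(T,\phi)$ with $T$ a finite tree and $\phi:X\to V(T)$ a map such that every vertex not in $\phi(X)$ has degree at least $3$; a vertex is labeled if it lies in $\phi(X)$. An $X$-forest is a set $\{(A,\mathcal T_A):A\in\pi\}$ where $\pi$ is a set partition of $X$ and each $\mathcal T_A$ is an $A$-tree. Contracting an edge $e=(u,v)$ removes $e$ and identifies $u,v$, the new vertex carrying the union of the labels of $u$ and $v$. Deleting $e$ removes $e$ without changing vertices; the deletion is safe if each of $u$ and $v$ is labeled or has degree greater than $3$. The Tuffley poset $S(X)$ is the set of $X$-forests ordered by $\mathcal F'\le\mathcal F$ iff $\mathcal F'$ is obtained from $\mathcal F$ by a sequence of contractions and safe deletions; $\mathcal F'\lessdot \mathcal F$ iff $\mathcal F'$ is obtained by a single contraction or safe deletion. $\mathcal C_X$ denotes the set of maximal elements of $S(X)$: trees whose leaves are labeled bijectively by $X$ and whose internal vertices are unlabeled of degree $3$. An internal edge is an edge both of whose endpoints are internal vertices. Nearest neighbor interchange (NNI): for $C\in\mathcal C_X$ and an internal edge $\alpha=(u,v)$, the edge $\alpha$ separates subtrees $A,B$ attached at $u$ from subtrees $C',D$ attached at $v$. Swapping $B$ with $C'$, or swapping $B$ with $D$, yields a new tree in $\mathcal C_X$; obtaining either of these from $C$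 is an NNI over $\alpha$. *)

theory Defs
  imports Main
begin

text \<open>A (labelled) graph on natural-number vertices: vertex set, set of edges
(each edge a 2-element set of vertices) and a labelling map \<phi> : X \<rightarrow> V
(only its values on X matter).  An X-forest \<open>{(A, T_A) : A \<in> \<pi>}\<close> is encoded
as the disjoint union of its trees; the partition \<pi> is then the partition
of X induced by the connected components.\<close>

type_synonym 'x lgraph = "nat set \<times> nat set set \<times> ('x \<Rightarrow> nat)"

definition verts :: "'x lgraph \<Rightarrow> nat set" where "verts G = fst G"
definition edges :: "'x lgraph \<Rightarrow> nat set set" where "edges G = fst (snd G)"
definition lab :: "'x lgraph \<Rightarrow> 'x \<Rightarrow> nat" where "lab G = snd (snd G)"

definition deg :: "'x lgraph \<Rightarrow> nat \<Rightarrow> nat" where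
  "deg G v = card {e \<in> edges G. v \<in> e}"

definition labeled :: "'x set \<Rightarrow> 'x lgraph \<Rightarrow> nat \<Rightarrow> bool" where
  "labeled X G v \<longleftrightarrow> v \<in> lab G ` X"

definition adj :: "'x lgraph \<Rightarrow> nat \<Rightarrow> nat \<Rightarrow> bool" where
  "adj G u v \<longleftrightarrow> {u, v} \<in> edges G"

definition wf_graph :: "'x set \<Rightarrow> 'x lgraph \<Rightarrow> bool" where
  "wf_graph X G \<longleftrightarrow> finite (verts G) \<and> lab G ` X \<subseteq> verts G \<and>
     (\<forall>e \<in> edges G. e \<subseteq> verts G \<and> card e = 2)"

definition has_cycle :: "'x lgraph \<Rightarrow> bool" where
  "has_cycle G \<longleftrightarrow> (\<exists>vs. length vs \<ge> 3 \<and> distinct vs \<and> set vs \<subseteq> verts G \<and>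
     (\<forall>i < length vs. {vs ! i, vs ! ((i + 1) mod length vs)} \<in> edges G))"

definition connected_in :: "'x lgraph \<Rightarrow> nat \<Rightarrow> nat \<Rightarrow> bool" where
  "connected_in G u v \<longleftrightarrow> (adj G)\<^sup>*\<^sup>* u v"

text \<open>X-forest: acyclic graph, every component contains a labelled vertex
(so each block of the induced partition is nonempty and each component is an
A-tree), every unlabelled vertex has degree at least 3.\<close>
definition is_X_forest :: "'x set \<Rightarrow> 'x lgraph \<Rightarrow> bool" where
  "is_X_forest X G \<longleftrightarrow> wf_graph X G \<and> \<not> has_cycle G \<and>
     (\<forall>v \<in> verts G. \<exists>x \<in> X. connected_in G v (lab G x)) \<and>
     (\<forall>v \<in> verts G. \<not> labeled X G v \<longrightarrow> deg G v \<ge> 3)"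

definition is_X_tree :: "'x set \<Rightarrow> 'x lgraph \<Rightarrow> bool" where
  "is_X_tree X G \<longleftrightarrow> is_X_forest X G \<and> verts G \<noteq> {} \<and>
     (\<forall>u \<in> verts G. \<forall>v \<in> verts G. connected_in G u v)"

text \<open>Isomorphism of X-labelled graphs (elements of S(X) are isomorphism classes).\<close>
definition iso :: "'x set \<Rightarrow> 'x lgraph \<Rightarrow> 'x lgraph \<Rightarrow> bool" where
  "iso X G H \<longleftrightarrow> (\<exists>f. bij_betw f (verts G) (verts H) \<and>
     (\<forall>u \<in> verts G. \<forall>v \<in> verts G. {u, v} \<in> edges G \<longleftrightarrow> {f u, f v} \<in> edges H) \<and>
     (\<forall>x \<in> X. f (lab G x) = lab H x))"

definition contract :: "'x lgraph \<Rightarrow> nat \<Rightarrow> nat \<Rightarrow> 'x lgraph" where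
  "contract G u v =
     (let r = (\<lambda>w. if w = v then u else w)
      in (verts G - {v}, (\<lambda>e. r ` e) ` (edges G - {{u, v}}), r \<circ> lab G))"

definition delete :: "'x lgraph \<Rightarrow> nat \<Rightarrow> nat \<Rightarrow> 'x lgraph" where
  "delete G u v = (verts G, edges G - {{u, v}}, lab G)"

definition safe_deletion :: "'x set \<Rightarrow> 'x lgraph \<Rightarrow> nat \<Rightarrow> nat \<Rightarrow> bool" where
  "safe_deletion X G u v \<longleftrightarrow>
     (labeled X G u \<or> deg G u > 3) \<and> (labeled X G v \<or> deg G v > 3)"

definition covered_by :: "'x set \<Rightarrow> 'x lgraph \<Rightarrow> 'x lgraph \<Rightarrow> bool" where
  "covered_by X F' F \<longleftrightarrow> (\<exists>u v. {u, v} \<in> edges F \<and>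
     (iso X F' (contract F u v) \<or> (safe_deletion X F u v \<and> iso X F' (delete F u v))))"

definition in_CX :: "'x set \<Rightarrow> 'x lgraph \<Rightarrow> bool" where
  "in_CX X C \<longleftrightarrow> is_X_tree X C \<and> inj_on (lab C) X \<and>
     (\<forall>v \<in> verts C. labeled X C v \<longleftrightarrow> deg C v \<le> 1) \<and>
     (\<forall>v \<in> verts C. \<not> labeled X C v \<longrightarrow> deg C v = 3)"

definition internal_vertex :: "'x set \<Rightarrow> 'x lgraph \<Rightarrow> nat \<Rightarrow> bool" where
  "internal_vertex X C v \<longleftrightarrow> v \<in> verts C \<and> \<not> labeled X C v"

text \<open>NNI over the internal edge {u,v}: a subtree hanging at u via neighbour b \<noteq> v
is swapped with a subtree hanging at v via neighbour c \<noteq> u.  Ranging over all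
choices of b and c gives exactly the two interchanges of the paper (up to
isomorphism), since b may be either of the two subtrees at u.\<close>
definition nni_result :: "'x lgraph \<Rightarrow> nat \<Rightarrow> nat \<Rightarrow> nat \<Rightarrow> nat \<Rightarrow> 'x lgraph" where
  "nni_result C u v b c =
     (verts C, (edges C - {{u, b}, {v, c}}) \<union> {{u, c}, {v, b}}, lab C)"

definition nni_over :: "'x set \<Rightarrow> 'x lgraph \<Rightarrow> nat \<Rightarrow> nat \<Rightarrow> 'x lgraph \<Rightarrow> bool" where
  "nni_over X C u v C' \<longleftrightarrow> {u, v} \<in> edges C \<and>
     internal_vertex X C u \<and> internal_vertex X C v \<and>
     (\<exists>b c. {u, b} \<in> edges C \<and> b \<noteq> v \<and> {v, c} \<in> edges C \<and> c \<noteq> u \<and>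
        iso X C' (nni_result C u v b c))"

end

theory Submission
  imports Defs
begin


definition nbrs :: "'x lgraph \<Rightarrow> nat \<Rightarrow> nat set" where
  "nbrs G y = {z. {y, z} \<in> edges G}"

definition labs :: "'x set \<Rightarrow> 'x lgraph \<Rightarrow> nat \<Rightarrow> 'x set" where
  "labs X G y = {x \<in> X. lab G x = y}"

definition wfe :: "'x lgraph \<Rightarrow> bool" where
  "wfe G \<longleftrightarrow> finite (verts G) \<and> (\<forall>e \<in> edges G. e \<subseteq> verts G \<and> card e = 2)"

lemma wf_wfe: "wf_graph X G \<Longrightarrow> wfe G"
  by (auto simp: wf_graph_def wfe_def)

lemma card2_neq: "card {a, b} = 2 \<Longrightarrow> a \<noteq> b"
  by (cases "a = b") auto

lemma wfe_edge: "wfe G \<Longrightarrow> {a, b} \<in> edges G \<Longrightarrow> a \<noteq> b \<and> a \<in> verts G \<and> b \<in> verts G"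
  unfolding wfe_def by (metis card2_neq insert_subset)

lemma wfe_edge_cases: "wfe G \<Longrightarrow> e \<in> edges G \<Longrightarrow> \<exists>a b. e = {a, b} \<and> a \<noteq> b"
  unfolding wfe_def by (metis card_2_iff)

lemma nbrs_sub: "wfe G \<Longrightarrow> nbrs G y \<subseteq> verts G - {y}"
  unfolding nbrs_def using wfe_edge by fastforce

lemma nbrs_finite: "wfe G \<Longrightarrow> finite (nbrs G y)"
  using nbrs_sub wfe_def by (metis finite_Diff finite_subset)

lemma deg_nbrs: assumes "wfe G" shows "deg G y = card (nbrs G y)"
proof -
  have "{e \<in> edges G. y \<in> e} = (\<lambda>z. {y, z}) ` nbrs G y"
  proof
    show "{e \<in> edges G. y \<in> e} \<subseteq> (\<lambda>z. {y, z}) ` nbrs G y"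
    proof
      fix e assume "e \<in> {e \<in> edges G. y \<in> e}"
      then obtain a b where e: "e = {a,b}" "a \<noteq> b" "e \<in> edges G" "y \<in> e"
        using wfe_edge_cases[OF assms] by blast
      then show "e \<in> (\<lambda>z. {y, z}) ` nbrs G y"
        unfolding nbrs_def by (auto simp: insert_commute)
    qed
  qed (auto simp: nbrs_def)
  moreover have "inj_on (\<lambda>z. {y, z}) (nbrs G y)"
    using nbrs_sub[OF assms, of y] by (auto simp: inj_on_def doubleton_eq_iff)
  ultimately show ?thesis unfolding deg_def by (simp add: card_image)
qed

lemma nbrs_sym: "z \<in> nbrs G y \<longleftrightarrow> y \<in> nbrs G z"
  by (simp add: nbrs_def insert_commute)

lemma labeled_labs: "labeled X G y \<longleftrightarrow> labs X G y \<noteq> {}"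
  by (auto simp: labeled_def labs_def)

definition cyc :: "'x lgraph \<Rightarrow> nat list \<Rightarrow> bool" where
  "cyc G vs \<longleftrightarrow> length vs \<ge> 3 \<and> distinct vs \<and> set vs \<subseteq> verts G \<and>
     successively (\<lambda>a b. {a, b} \<in> edges G) (vs @ [hd vs])"

lemma has_cycle_cyc: "has_cycle G \<longleftrightarrow> (\<exists>vs. cyc G vs)"
proof -
  have eq: "(\<forall>i < length vs. {vs ! i, vs ! ((i + 1) mod length vs)} \<in> edges G)
      \<longleftrightarrow> successively (\<lambda>a b. {a, b} \<in> edges G) (vs @ [hd vs])" if "length vs \<ge> 3" for vs
  proof -
    have "(vs @ [hd vs]) ! i = vs ! (i mod length vs)" if "i \<le> length vs" for i
      proof -
      have ne: "vs \<noteq> []" using \<open>length vs \<ge> 3\<close> by auto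
      show ?thesis using that \<open>length vs \<ge> 3\<close> hd_conv_nth[OF ne]
        by (cases "i = length vs") (auto simp: nth_append)
    qed
    moreover have "(i + 1) mod length vs = Suc i mod length vs" for i by simp
    ultimately show ?thesis using \<open>length vs \<ge> 3\<close>
      unfolding successively_conv_nth
      by (auto simp del: mod_Suc)
  qed
  show ?thesis unfolding has_cycle_def cyc_def using eq by blast
qed

lemma cyc_rotate1: assumes "cyc G vs" shows "cyc G (rotate1 vs)"
proof -
  obtain x xs where vs: "vs = x # xs" using assms unfolding cyc_def by (cases vs) auto
  have "xs \<noteq> []" using assms vs unfolding cyc_def by auto
  then show ?thesis using assms unfolding cyc_def vs
    by (auto simp: successively_append_iff successively_Cons)
qed

lemma cyc_rotate: "cyc G vs \<Longrightarrow> cyc G (rotate n vs)"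
  by (induction n) (auto simp: cyc_rotate1)

lemma cyc_start: assumes "cyc G vs" "u \<in> set vs" shows "\<exists>ys. cyc G (u # ys)"
proof -
  obtain k where k: "k < length vs" "vs ! k = u" using assms(2) by (metis in_set_conv_nth)
  have "rotate k vs \<noteq> []" using assms(1) unfolding cyc_def by auto
  moreover have "hd (rotate k vs) = u" proof -
    have "vs \<noteq> []" using k by auto
    then show ?thesis using k hd_rotate_conv_nth[of vs k] by auto
  qed
  ultimately show ?thesis using cyc_rotate[OF assms(1), of k] by (metis list.collapse)
qed

lemma triangle: assumes "\<not> has_cycle G" "wfe G" "{a,b} \<in> edges G" "{b,c} \<in> edges G" "{a,c} \<in> edges G"
  shows False
proof -
  have "a \<noteq> b" "b \<noteq> c" "a \<noteq> c" "a \<in> verts G" "b \<in> verts G" "c \<in> verts G"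
    using wfe_edge[OF assms(2)] assms(3-5) by blast+
  then have "cyc G [a,b,c]" using assms(3-5) unfolding cyc_def by (auto simp: insert_commute)
  then show False using assms(1) has_cycle_cyc by blast
qed



definition rr :: "nat \<Rightarrow> nat \<Rightarrow> nat \<Rightarrow> nat" where
  "rr u v w = (if w = v then u else w)"

lemma contract_verts[simp]: "verts (contract G u v) = verts G - {v}"
  by (simp add: contract_def verts_def Let_def)
lemma contract_edges: "edges (contract G u v) = (\<lambda>e. rr u v ` e) ` (edges G - {{u,v}})"
  by (simp add: contract_def edges_def Let_def rr_def)
lemma contract_lab: "lab (contract G u v) x = rr u v (lab G x)"
  by (simp add: contract_def lab_def Let_def rr_def)

lemma cei1: assumes "wfe G" "e \<in> edges G" "e \<noteq> {u,v}" "{p,q} = rr u v ` e"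
  shows "\<exists>a b. {a,b} \<in> edges G \<and> {a,b} \<noteq> {u,v} \<and> p = rr u v a \<and> q = rr u v b"
proof -
  obtain a b where ab: "e = {a,b}" using wfe_edge_cases[OF assms(1) assms(2)] by blast
  then have "{p,q} = {rr u v a, rr u v b}" using assms by auto
  then have "(p = rr u v a \<and> q = rr u v b) \<or> (p = rr u v b \<and> q = rr u v a)"
    by (simp add: doubleton_eq_iff)
  moreover have "{b,a} \<in> edges G" "{b,a} \<noteq> {u,v}" using assms ab by (simp_all add: insert_commute)
  ultimately show ?thesis
    using assms ab by blast
qed

lemma cei2: assumes "{a,b} \<in> edges G" "{a,b} \<noteq> {u,v}" "p = rr u v a" "q = rr u v b"
  shows "{p,q} \<in> edges (contract G u v)"
proof -
  have "{p,q} = rr u v ` {a,b}" using assms by simp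
  then show ?thesis unfolding contract_edges using assms(1,2) by blast
qed

lemma cei0: assumes "{p,q} \<in> edges (contract G u v)" shows "\<exists>e. e \<in> edges G \<and> e \<noteq> {u,v} \<and> {p,q} = rr u v ` e"
  using assms unfolding contract_edges by auto

lemma contract_edge_iff: assumes "wfe G"
  shows "{p,q} \<in> edges (contract G u v) \<longleftrightarrow>
    (\<exists>a b. {a,b} \<in> edges G \<and> {a,b} \<noteq> {u,v} \<and> p = rr u v a \<and> q = rr u v b)"
proof
  assume "{p,q} \<in> edges (contract G u v)"
  then have "\<exists>e. e \<in> edges G \<and> e \<noteq> {u,v} \<and> {p,q} = rr u v ` e" by (rule cei0)
  then obtain e where e: "e \<in> edges G" "e \<noteq> {u,v}" "{p,q} = rr u v ` e" by blast
  show "\<exists>a b. {a,b} \<in> edges G \<and> {a,b} \<noteq> {u,v} \<and> p = rr u v a \<and> q = rr u v b"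
    by (rule cei1[OF assms e])
next
  assume "\<exists>a b. {a,b} \<in> edges G \<and> {a,b} \<noteq> {u,v} \<and> p = rr u v a \<and> q = rr u v b"
  then obtain a b where ab: "{a,b} \<in> edges G" "{a,b} \<noteq> {u,v}" "p = rr u v a" "q = rr u v b"
    by blast
  show "{p,q} \<in> edges (contract G u v)" by (rule cei2[OF ab])
qed

lemma rr_neq_v: "u \<noteq> v \<Longrightarrow> rr u v w \<noteq> v"
  by (simp add: rr_def)

lemma contract_wfe: assumes "wfe G" "{u,v} \<in> edges G" shows "wfe (contract G u v)"
proof -
  have uv: "u \<noteq> v" "u \<in> verts G" "v \<in> verts G" using wfe_edge[OF assms] by auto
  have "e \<subseteq> verts G - {v} \<and> card e = 2" if eW: "e \<in> edges (contract G u v)" for e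
  proof -
    obtain e0 where e0: "e0 \<in> edges G" "e0 \<noteq> {u,v}" "e = rr u v ` e0"
      using eW unfolding contract_edges by blast
    obtain a b where ab: "e0 = {a,b}" "a \<noteq> b" using wfe_edge_cases[OF assms(1) e0(1)] by blast
    have "{a,b} \<in> edges G" using e0(1) ab(1) by simp
    then have "a \<in> verts G" "b \<in> verts G" using wfe_edge[OF assms(1)] by blast+
    moreover have "rr u v a \<noteq> rr u v b"
    proof -
      have "{a,b} \<noteq> {u,v}" using e0(2) ab(1) by simp
      then have "\<not> (a = u \<and> b = v)" "\<not> (a = v \<and> b = u)" by (auto simp: doubleton_eq_iff)
      then show ?thesis using ab(2) uv(1) unfolding rr_def by auto
    qed
    moreover have "rr u v x \<in> verts G - {v}" if "x \<in> verts G" for x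
      using that uv unfolding rr_def by auto
    ultimately show ?thesis using e0(3) ab(1) by simp
  qed
  then show ?thesis using assms(1) unfolding wfe_def by auto
qed

lemma rr_other: "a \<noteq> v \<Longrightarrow> rr u v a = a" by (simp add: rr_def)
lemma rr_v: "rr u v v = u" by (simp add: rr_def)
lemma rr_eq_other: "p = rr u v a \<Longrightarrow> p \<noteq> u \<Longrightarrow> a = p"
  unfolding rr_def by (cases "a = v") simp_all
lemma rr_eq_u: "u = rr u v a \<Longrightarrow> a = u \<or> a = v"
  unfolding rr_def by (cases "a = v") simp_all

context
  fixes G :: "'x lgraph" and u v :: nat
  assumes wG: "wfe G" and uvE: "{u,v} \<in> edges G"
begin

lemma uv_neq: "u \<noteq> v" using wfe_edge[OF wG uvE] by auto

lemma contract_edge_off: assumes "p \<notin> {u,v}" "q \<notin> {u,v}"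
  shows "{p,q} \<in> edges (contract G u v) \<longleftrightarrow> {p,q} \<in> edges G"
proof
  assume "{p,q} \<in> edges (contract G u v)"
  then obtain a b where ab: "{a,b} \<in> edges G" "p = rr u v a" "q = rr u v b"
    unfolding contract_edge_iff[OF wG] by blast
  have "a = p" using rr_eq_other[OF ab(2)] assms(1) by simp
  moreover have "b = q" using rr_eq_other[OF ab(3)] assms(2) by simp
  ultimately show "{p,q} \<in> edges G" using ab(1) by simp
next
  assume e: "{p,q} \<in> edges G"
  have ne: "{p,q} \<noteq> {u,v}" using assms by auto
  have "p = rr u v p" "q = rr u v q" using assms rr_other[of p v u] rr_other[of q v u] by auto
  then show "{p,q} \<in> edges (contract G u v)" using cei2[OF e ne] by simp
qed

lemma contract_edge_u: assumes "z \<notin> {u,v}"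
  shows "{u,z} \<in> edges (contract G u v) \<longleftrightarrow> {u,z} \<in> edges G \<or> {v,z} \<in> edges G"
proof
  assume "{u,z} \<in> edges (contract G u v)"
  then obtain a b where ab: "{a,b} \<in> edges G" "u = rr u v a" "z = rr u v b"
    unfolding contract_edge_iff[OF wG] by blast
  have "b = z" using rr_eq_other[OF ab(3)] assms by simp
  moreover have "a = u \<or> a = v" using rr_eq_u[OF ab(2)] .
  ultimately show "{u,z} \<in> edges G \<or> {v,z} \<in> edges G" using ab(1) by auto
next
  assume "{u,z} \<in> edges G \<or> {v,z} \<in> edges G"
  moreover have z: "u = rr u v u" "z = rr u v z" "u = rr u v v"
    using assms uv_neq by (simp_all add: rr_def)
  moreover have "{u,z} \<noteq> {u,v}" "{v,z} \<noteq> {u,v}" using assms uv_neq by (auto simp: doubleton_eq_iff)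
  ultimately show "{u,z} \<in> edges (contract G u v)"
    using cei2[of u z G u v u z] cei2[of v z G u v u z] by blast
qed

lemma contract_nbrs_u: "nbrs (contract G u v) u = (nbrs G u \<union> nbrs G v) - {u,v}"
proof -
  have W: "wfe (contract G u v)" using contract_wfe[OF wG uvE] .
  have "z \<notin> {u,v}" if "z \<in> nbrs (contract G u v) u" for z
    using nbrs_sub[OF W, of u] that by auto
  then show ?thesis using contract_edge_u unfolding nbrs_def by blast
qed

lemma contract_nbrs_other: assumes "y \<notin> {u,v}"
  shows "nbrs (contract G u v) y = rr u v ` nbrs G y"
proof
  show "nbrs (contract G u v) y \<subseteq> rr u v ` nbrs G y"
  proof
    fix z assume "z \<in> nbrs (contract G u v) y"
    then obtain a b where ab: "{a,b} \<in> edges G" "y = rr u v a" "z = rr u v b"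
      unfolding nbrs_def contract_edge_iff[OF wG] by blast
    have "a = y" using rr_eq_other[OF ab(2)] assms by simp
    then have "b \<in> nbrs G y" using ab(1) unfolding nbrs_def by simp
    then show "z \<in> rr u v ` nbrs G y" using ab(3) by (rule rev_image_eqI)
  qed
next
  show "rr u v ` nbrs G y \<subseteq> nbrs (contract G u v) y"
  proof
    fix z assume "z \<in> rr u v ` nbrs G y"
    then obtain b where b: "{y,b} \<in> edges G" "z = rr u v b" unfolding nbrs_def by auto
    have ne: "{y,b} \<noteq> {u,v}" using assms by auto
    have "y = rr u v y" using assms by (simp add: rr_def)
    then have "{y,z} \<in> edges (contract G u v)" using cei2[OF b(1) ne _ b(2)] by simp
    then show "z \<in> nbrs (contract G u v) y" unfolding nbrs_def by simp
  qed
qed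

lemma contract_labs_u: "labs X (contract G u v) u = labs X G u \<union> labs X G v"
proof -
  have "rr u v w = u \<longleftrightarrow> w = u \<or> w = v" for w using uv_neq unfolding rr_def by auto
  then show ?thesis unfolding labs_def contract_lab by blast
qed

lemma contract_labs_other: assumes "y \<notin> {u,v}" shows "labs X (contract G u v) y = labs X G y"
proof -
  have "rr u v w = y \<longleftrightarrow> w = y" for w using assms unfolding rr_def by auto
  then show ?thesis unfolding labs_def contract_lab by blast
qed

end

lemma iso_refl: "iso X G G"
  unfolding iso_def by (rule exI[of _ id]) auto

lemma iso_sym: assumes "iso X G H" "wf_graph X G" "wf_graph X H" shows "iso X H G"
proof -
  obtain f where f: "bij_betw f (verts G) (verts H)"
    "\<forall>u \<in> verts G. \<forall>v \<in> verts G. {u, v} \<in> edges G \<longleftrightarrow> {f u, f v} \<in> edges H"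
    "\<forall>x \<in> X. f (lab G x) = lab H x" using assms(1) unfolding iso_def by blast
  let ?g = "inv_into (verts G) f"
  have g: "bij_betw ?g (verts H) (verts G)" using f(1) by (rule bij_betw_inv_into)
  have fg: "f (?g y) = y" if "y \<in> verts H" for y using f(1) that by (meson bij_betw_inv_into_right)
  have "{u, v} \<in> edges H \<longleftrightarrow> {?g u, ?g v} \<in> edges G" if "u \<in> verts H" "v \<in> verts H" for u v
  proof -
    have "?g u \<in> verts G" "?g v \<in> verts G" using g that by (meson bij_betwE)+
    then have "{?g u, ?g v} \<in> edges G \<longleftrightarrow> {f (?g u), f (?g v)} \<in> edges H" using f(2) by blast
    then show ?thesis using fg that by simp
  qed
  moreover have "?g (lab H x) = lab G x" if "x \<in> X" for x
  proof -
    have "lab G x \<in> verts G" using assms(2) that unfolding wf_graph_def by auto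
    then have "?g (f (lab G x)) = lab G x" using f(1) by (simp add: bij_betw_inv_into_left)
    then show ?thesis using f(3) that by simp
  qed
  ultimately show ?thesis unfolding iso_def using g by blast
qed



lemma iso_trans: assumes "iso X G H" "iso X H K" shows "iso X G K"
proof -
  obtain f where f: "bij_betw f (verts G) (verts H)"
    "\<forall>u \<in> verts G. \<forall>v \<in> verts G. {u, v} \<in> edges G \<longleftrightarrow> {f u, f v} \<in> edges H"
    "\<forall>x \<in> X. f (lab G x) = lab H x" using assms(1) unfolding iso_def by blast
  obtain g where g: "bij_betw g (verts H) (verts K)"
    "\<forall>u \<in> verts H. \<forall>v \<in> verts H. {u, v} \<in> edges H \<longleftrightarrow> {g u, g v} \<in> edges K"
    "\<forall>x \<in> X. g (lab H x) = lab K x" using assms(2) unfolding iso_def by blast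
  have "bij_betw (g \<circ> f) (verts G) (verts K)" using f(1) g(1) by (rule bij_betw_trans)
  moreover have "\<forall>u \<in> verts G. \<forall>v \<in> verts G. {u, v} \<in> edges G \<longleftrightarrow> {(g\<circ>f) u, (g\<circ>f) v} \<in> edges K"
  proof (intro ballI)
    fix u v assume uv: "u \<in> verts G" "v \<in> verts G"
    then have "f u \<in> verts H" "f v \<in> verts H" using f(1) by (meson bij_betwE)+
    then show "{u, v} \<in> edges G \<longleftrightarrow> {(g\<circ>f) u, (g\<circ>f) v} \<in> edges K" using f(2) g(2) uv by simp
  qed
  moreover have "\<forall>x \<in> X. (g\<circ>f) (lab G x) = lab K x" using f g by simp
  ultimately show ?thesis unfolding iso_def by blast
qed

lemma iso_labs: assumes "bij_betw f (verts G) (verts H)" "\<forall>x \<in> X. f (lab G x) = lab H x"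
  "wf_graph X G" "y \<in> verts G"
  shows "labs X H (f y) = labs X G y"
proof -
  have "lab G x \<in> verts G" if "x \<in> X" for x using assms(3) that unfolding wf_graph_def by auto
  then show ?thesis using assms unfolding labs_def bij_betw_def inj_on_def by (metis (full_types))
qed

lemma iso_nbrs: assumes "bij_betw f (verts G) (verts H)"
  "\<forall>u \<in> verts G. \<forall>v \<in> verts G. {u, v} \<in> edges G \<longleftrightarrow> {f u, f v} \<in> edges H"
  "wfe G" "wfe H" "y \<in> verts G"
  shows "nbrs H (f y) = f ` nbrs G y"
proof
  show "f ` nbrs G y \<subseteq> nbrs H (f y)"
    using assms(2,5) nbrs_sub[OF assms(3), of y] unfolding nbrs_def by auto
next
  show "nbrs H (f y) \<subseteq> f ` nbrs G y"
  proof
    fix z assume z: "z \<in> nbrs H (f y)"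
    then have "z \<in> verts H" using nbrs_sub[OF assms(4)] by auto
    then obtain z0 where "z0 \<in> verts G" "z = f z0" using assms(1) by (metis bij_betw_imp_surj_on imageE)
    then show "z \<in> f ` nbrs G y" using z assms(2,5) unfolding nbrs_def by auto
  qed
qed

lemma iso_card_nbrs: assumes "bij_betw f (verts G) (verts H)"
  "\<forall>u \<in> verts G. \<forall>v \<in> verts G. {u, v} \<in> edges G \<longleftrightarrow> {f u, f v} \<in> edges H"
  "wfe G" "wfe H" "y \<in> verts G"
  shows "card (nbrs H (f y)) = card (nbrs G y)"
proof -
  have "inj_on f (nbrs G y)" using assms(1) nbrs_sub[OF assms(3), of y]
    unfolding bij_betw_def by (meson Diff_subset inj_on_subset subset_trans)
  then show ?thesis using iso_nbrs[OF assms] by (simp add: card_image)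
qed

lemma wf_graph_contract: assumes "wf_graph X G" "{u,v} \<in> edges G"
  shows "wf_graph X (contract G u v)"
proof -
  have w: "wfe (contract G u v)" using contract_wfe[OF wf_wfe[OF assms(1)] assms(2)] .
  have "u \<in> verts G" "u \<noteq> v" using wfe_edge[OF wf_wfe[OF assms(1)] assms(2)] by auto
  then have "lab (contract G u v) ` X \<subseteq> verts (contract G u v)"
    using assms(1) unfolding wf_graph_def by (auto simp: contract_lab rr_def)
  then show ?thesis using w unfolding wf_graph_def wfe_def by auto
qed

lemma iso_contract: assumes "iso X G H" "wf_graph X G" "wf_graph X H" "{a,b} \<in> edges G"
  shows "\<exists>c d. {c,d} \<in> edges H \<and> iso X (contract G a b) (contract H c d)"
proof -
  obtain f where f: "bij_betw f (verts G) (verts H)"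
    "\<forall>u \<in> verts G. \<forall>v \<in> verts G. {u, v} \<in> edges G \<longleftrightarrow> {f u, f v} \<in> edges H"
    "\<forall>x \<in> X. f (lab G x) = lab H x" using assms(1) unfolding iso_def by blast
  have wG: "wfe G" and wH: "wfe H" using assms(2,3) by (auto simp: wf_wfe)
  have ab: "a \<in> verts G" "b \<in> verts G" "a \<noteq> b" using wfe_edge[OF wG assms(4)] by auto
  have inj: "inj_on f (verts G)" using f(1) unfolding bij_betw_def by blast
  have fab: "{f a, f b} \<in> edges H" using f(2) ab assms(4) by blast
  have comm: "f (rr a b x) = rr (f a) (f b) (f x)" if "x \<in> verts G" for x
    using that ab inj by (auto simp: rr_def inj_on_def)
  have rG: "rr a b x \<in> verts G" if "x \<in> verts G" for x using that ab by (simp add: rr_def)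
  have bij: "bij_betw f (verts G - {b}) (verts H - {f b})"
  proof -
    have "f b \<in> verts H" using f(1) ab by (meson bij_betwE)
    then show ?thesis using bij_betw_DiffI[OF f(1), of "{b}" "{f b}"] ab by auto
  qed
  have sets: "{f a', f b'} = {f a, f b} \<longleftrightarrow> {a',b'} = {a,b}" if "a' \<in> verts G" "b' \<in> verts G" for a' b'
    using that ab inj unfolding doubleton_eq_iff inj_on_def by metis
  have edges: "{p, q} \<in> edges (contract G a b) \<longleftrightarrow> {f p, f q} \<in> edges (contract H (f a) (f b))"
    if pq: "p \<in> verts G - {b}" "q \<in> verts G - {b}" for p q
  proof
    assume "{p, q} \<in> edges (contract G a b)"
    then obtain a' b' where e: "{a',b'} \<in> edges G" "{a',b'} \<noteq> {a,b}" "p = rr a b a'" "q = rr a b b'"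
      unfolding contract_edge_iff[OF wG] by blast
    have v: "a' \<in> verts G" "b' \<in> verts G" using wfe_edge[OF wG e(1)] by auto
    then have "{f a', f b'} \<in> edges H" "{f a', f b'} \<noteq> {f a, f b}" "f p = rr (f a) (f b) (f a')"
      "f q = rr (f a) (f b) (f b')" using e f(2) sets comm by auto
    then show "{f p, f q} \<in> edges (contract H (f a) (f b))" unfolding contract_edge_iff[OF wH] by blast
  next
    assume "{f p, f q} \<in> edges (contract H (f a) (f b))"
    then obtain c' d' where e: "{c',d'} \<in> edges H" "{c',d'} \<noteq> {f a,f b}"
      "f p = rr (f a) (f b) c'" "f q = rr (f a) (f b) d'"
      unfolding contract_edge_iff[OF wH] by blast
    have "c' \<in> verts H" "d' \<in> verts H" using wfe_edge[OF wH e(1)] by auto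
    then obtain a' b' where v: "a' \<in> verts G" "b' \<in> verts G" "c' = f a'" "d' = f b'"
      using f(1) by (metis bij_betw_imp_surj_on imageE)
    have "{a',b'} \<in> edges G" "{a',b'} \<noteq> {a,b}" using e v f(2) sets by auto
    moreover have "p = rr a b a'" "q = rr a b b'" using e(3,4) v comm rG pq inj
      by (metis DiffD1 inj_onD)+
    ultimately show "{p, q} \<in> edges (contract G a b)" unfolding contract_edge_iff[OF wG] by blast
  qed
  have labs: "f (lab (contract G a b) x) = lab (contract H (f a) (f b)) x" if "x \<in> X" for x
    using that f(3) comm assms(2) unfolding wf_graph_def by (auto simp: contract_lab)
  have "iso X (contract G a b) (contract H (f a) (f b))"
    unfolding iso_def using bij edges labs by (intro exI[of _ f]) auto
  then show ?thesis using fab by blast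
qed



lemma cx_forest: "in_CX X C \<Longrightarrow> is_X_forest X C"
  by (simp add: in_CX_def is_X_tree_def)
lemma cx_wf: "in_CX X C \<Longrightarrow> wf_graph X C"
  by (simp add: in_CX_def is_X_tree_def is_X_forest_def)
lemma cx_wfe: "in_CX X C \<Longrightarrow> wfe C"
  using cx_wf wf_wfe by blast
lemma cx_acyc: "in_CX X C \<Longrightarrow> \<not> has_cycle C"
  by (simp add: in_CX_def is_X_tree_def is_X_forest_def)

lemma cx_labs_le1: assumes "in_CX X C" shows "labs X C y = {} \<or> (\<exists>x. labs X C y = {x})"
proof -
  have "inj_on (lab C) X" using assms by (simp add: in_CX_def)
  then show ?thesis unfolding labs_def inj_on_def by blast
qed

lemma cx_labs_card: assumes "in_CX X C" "labs X C y \<noteq> {}" shows "card (labs X C y) = 1"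
  using cx_labs_le1[OF assms(1), of y] assms(2) by auto

lemma cx_deg_lab: assumes "in_CX X C" "y \<in> verts C" "labs X C y \<noteq> {}"
  shows "card (nbrs C y) \<le> 1"
  using assms deg_nbrs[OF cx_wfe[OF assms(1)]] labeled_labs unfolding in_CX_def by metis

lemma cx_deg_unlab: assumes "in_CX X C" "y \<in> verts C" "labs X C y = {}"
  shows "card (nbrs C y) = 3"
  using assms deg_nbrs[OF cx_wfe[OF assms(1)]] labeled_labs unfolding in_CX_def by metis

lemma cx_leaf_nbrs: assumes "in_CX X C" "{u,v} \<in> edges C" "labs X C u \<noteq> {}"
  shows "nbrs C u = {v}"
proof -
  have "u \<in> verts C" using wfe_edge[OF cx_wfe[OF assms(1)] assms(2)] by auto
  then have c: "card (nbrs C u) \<le> 1" using cx_deg_lab[OF assms(1) _ assms(3)] by blast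
  have "v \<in> nbrs C u" using assms(2) by (simp add: nbrs_def)
  then show ?thesis using c nbrs_finite[OF cx_wfe[OF assms(1)], of u]
    using card_le_Suc0_iff_eq[of "nbrs C u"] by auto
qed

lemma cx_two: assumes "in_CX X C" "{a,b} \<in> edges C" "nbrs C a \<subseteq> {b}" "nbrs C b \<subseteq> {a}"
  shows "verts C = {a,b}"
proof -
  have ab: "a \<in> verts C" "b \<in> verts C" using wfe_edge[OF cx_wfe[OF assms(1)] assms(2)] by auto
  have conn: "connected_in C y a" if "y \<in> verts C" for y
    using assms(1) that ab unfolding in_CX_def is_X_tree_def by blast
  have "y \<in> {a,b}" if "(adj C)\<^sup>*\<^sup>* y a" for y
    using that
  proof (induction rule: converse_rtranclp_induct)
    case base then show ?case by simp
  next
    case (step y y')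
    then have "y \<in> nbrs C y'" by (simp add: adj_def nbrs_def insert_commute)
    then show ?case using step assms(3,4) by auto
  qed
  then show ?thesis using conn ab unfolding connected_in_def by blast
qed

definition good :: "'x set \<Rightarrow> 'x lgraph \<Rightarrow> nat \<Rightarrow> bool" where
  "good X W y \<longleftrightarrow> (labs X W y = {} \<and> card (nbrs W y) = 3) \<or>
                   (card (labs X W y) = 1 \<and> card (nbrs W y) \<le> 1)"

lemma iso_good: assumes "bij_betw f (verts G) (verts H)"
  "\<forall>u \<in> verts G. \<forall>v \<in> verts G. {u, v} \<in> edges G \<longleftrightarrow> {f u, f v} \<in> edges H"
  "\<forall>x \<in> X. f (lab G x) = lab H x" "wf_graph X G" "wf_graph X H" "y \<in> verts G"
  shows "good X H (f y) \<longleftrightarrow> good X G y"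
  unfolding good_def using iso_labs[OF assms(1,3,4,6)]
    iso_card_nbrs[OF assms(1,2) wf_wfe[OF assms(4)] wf_wfe[OF assms(5)] assms(6)] by simp

lemma rr_inj: assumes "\<not> (u \<in> S \<and> v \<in> S)" shows "inj_on (rr u v) S"
  using assms unfolding inj_on_def rr_def by auto

lemma cx_good_contract: assumes "in_CX X C" "{u,v} \<in> edges C" "y \<in> verts C" "y \<notin> {u,v}"
  shows "good X (contract C u v) y"
proof -
  have w: "wfe C" using cx_wfe[OF assms(1)] .
  have "\<not> (u \<in> nbrs C y \<and> v \<in> nbrs C y)"
    using triangle[OF cx_acyc[OF assms(1)] w, of y u v] assms(2) unfolding nbrs_def by auto
  then have "card (nbrs (contract C u v) y) = card (nbrs C y)"
    using contract_nbrs_other[OF w assms(2,4)] rr_inj by (simp add: card_image)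
  moreover have "labs X (contract C u v) y = labs X C y"
    using contract_labs_other[OF w assms(2,4)] .
  ultimately show ?thesis unfolding good_def
    using cx_labs_card[OF assms(1)] cx_deg_lab[OF assms(1,3)] cx_deg_unlab[OF assms(1,3)] by auto
qed

lemma cx_nbrs_contract_u: assumes "in_CX X C" "{u,v} \<in> edges C"
  shows "nbrs (contract C u v) u = (nbrs C u - {v}) \<union> (nbrs C v - {u})"
    "(nbrs C u - {v}) \<inter> (nbrs C v - {u}) = {}"
    "card (nbrs C u - {v}) = card (nbrs C u) - 1"
    "card (nbrs C v - {u}) = card (nbrs C v) - 1"
proof -
  have w: "wfe C" using cx_wfe[OF assms(1)] .
  show "nbrs (contract C u v) u = (nbrs C u - {v}) \<union> (nbrs C v - {u})"
    using contract_nbrs_u[OF w assms(2)] nbrs_sub[OF w, of u] nbrs_sub[OF w, of v] by auto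
  show "(nbrs C u - {v}) \<inter> (nbrs C v - {u}) = {}"
    using triangle[OF cx_acyc[OF assms(1)] w, of u v] assms(2) unfolding nbrs_def
    by (auto simp: insert_commute)
  have "v \<in> nbrs C u" "u \<in> nbrs C v" using assms(2) by (auto simp: nbrs_def insert_commute)
  then show "card (nbrs C u - {v}) = card (nbrs C u) - 1" "card (nbrs C v - {u}) = card (nbrs C v) - 1"
    by (auto simp: card_Diff_singleton_if)
qed

lemma cx_bad_u: assumes "in_CX X C" "{u,v} \<in> edges C"
  shows "\<not> good X (contract C u v) u"
proof -
  have w: "wfe C" using cx_wfe[OF assms(1)] .
  have uv: "u \<in> verts C" "v \<in> verts C" "u \<noteq> v" using wfe_edge[OF w assms(2)] by auto
  note N = cx_nbrs_contract_u[OF assms]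
  have fin: "finite (nbrs C u - {v})" "finite (nbrs C v - {u})" using nbrs_finite[OF w] by auto
  have cardN: "card (nbrs (contract C u v) u) = card (nbrs C u) - 1 + (card (nbrs C v) - 1)"
    using N fin by (simp add: card_Un_disjoint)
  have L: "labs X (contract C u v) u = labs X C u \<union> labs X C v"
    using contract_labs_u[OF w assms(2)] .
  have Ld: "labs X C u \<inter> labs X C v = {}" using uv by (auto simp: labs_def)
  have vu: "v \<in> nbrs C u" "u \<in> nbrs C v" using assms(2) by (auto simp: nbrs_def insert_commute)
  have p1: "card (nbrs C u) \<ge> 1" "card (nbrs C v) \<ge> 1" using vu nbrs_finite[OF w]
    by (metis One_nat_def Suc_leI card_gt_0_iff empty_iff)+
  show ?thesis
  proof (cases "labs X C u = {}"; cases "labs X C v = {}")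
    assume a: "labs X C u = {}" "labs X C v = {}"
    then have "card (nbrs C u) = 3" "card (nbrs C v) = 3" using cx_deg_unlab[OF assms(1)] uv by auto
    then show ?thesis using a L cardN unfolding good_def by auto
  next
    assume a: "labs X C u = {}" "labs X C v \<noteq> {}"
    then have "card (nbrs C u) = 3" "card (nbrs C v) \<le> 1" "card (labs X C v) = 1"
      using cx_deg_unlab[OF assms(1)] cx_deg_lab[OF assms(1)] cx_labs_card[OF assms(1)] uv by auto
    then show ?thesis using a L cardN p1 unfolding good_def by auto
  next
    assume a: "labs X C u \<noteq> {}" "labs X C v = {}"
    then have "card (nbrs C v) = 3" "card (nbrs C u) \<le> 1" "card (labs X C u) = 1"
      using cx_deg_unlab[OF assms(1)] cx_deg_lab[OF assms(1)] cx_labs_card[OF assms(1)] uv by auto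
    then show ?thesis using a L cardN p1 unfolding good_def by auto
  next
    assume a: "labs X C u \<noteq> {}" "labs X C v \<noteq> {}"
    then have "card (labs X C v) = 1" "card (labs X C u) = 1"
      using cx_labs_card[OF assms(1)] by auto
    moreover have "finite (labs X C u)" "finite (labs X C v)" using calculation
      by (metis card.infinite zero_neq_one)+
    ultimately have "card (labs X (contract C u v) u) = 2" using L Ld by (simp add: card_Un_disjoint)
    then show ?thesis unfolding good_def by auto
  qed
qed



lemma wfe_loop: "wfe G \<Longrightarrow> {y,y} \<notin> edges G"
  using wfe_edge by fastforce

lemma build_iso:
  assumes wH: "wfe H" and wT: "wfe T"
    and pq: "p \<noteq> q" "p \<in> verts H" "q \<in> verts H"
    and st: "s \<noteq> t" "s \<in> verts T" "t \<in> verts T"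
    and g: "bij_betw g (verts H - {p,q}) (verts T - {s,t})"
    and off: "\<forall>y\<in>verts H - {p,q}. \<forall>z \<in> verts H - {p,q}. {y,z} \<in> edges H \<longleftrightarrow> {g y, g z} \<in> edges T"
    and ps: "\<forall>z\<in>verts H - {p,q}. {p,z} \<in> edges H \<longleftrightarrow> {s, g z} \<in> edges T"
    and qt: "\<forall>z\<in>verts H - {p,q}. {q,z} \<in> edges H \<longleftrightarrow> {t, g z} \<in> edges T"
    and e: "{p,q} \<in> edges H" "{s,t} \<in> edges T"
    and lp: "\<forall>x\<in>X. lab H x = p \<longrightarrow> lab T x = s"
    and lq: "\<forall>x\<in>X. lab H x = q \<longrightarrow> lab T x = t"
    and lo: "\<forall>x\<in>X. lab H x \<notin> {p,q} \<longrightarrow> lab T x = g (lab H x)"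
  shows "iso X H T"
proof -
  define k where "k y = (if y = p then s else if y = q then t else g y)" for y
  have gin: "g y \<in> verts T - {s,t}" if "y \<in> verts H - {p,q}" for y using g that by (meson bij_betwE)
  have ginj: "inj_on g (verts H - {p,q})" using g unfolding bij_betw_def by blast
  have gsurj: "g ` (verts H - {p,q}) = verts T - {s,t}" using g unfolding bij_betw_def by blast
  have kp: "k p = s" and kq: "k q = t" using pq(1) by (simp_all add: k_def)
  have ko: "k y = g y" if "y \<notin> {p,q}" for y using that by (simp add: k_def)
  have "inj_on k (verts H)"
  proof (rule inj_onI)
    fix y z assume yz: "y \<in> verts H" "z \<in> verts H" "k y = k z"
    show "y = z"
    proof (cases "y \<in> {p,q}")
      case True
      show ?thesis
      proof (cases "z \<in> {p,q}")
        case True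
        then show ?thesis using \<open>y \<in> {p,q}\<close> yz(3) kp kq st(1) by auto
      next
        case False
        then have "k z \<notin> {s,t}" using ko gin yz(2) by simp
        then show ?thesis using \<open>y \<in> {p,q}\<close> yz(3) kp kq by auto
      qed
    next
      case False
      then have ky: "k y = g y" "g y \<notin> {s,t}" using ko gin yz(1) by auto
      show ?thesis
      proof (cases "z \<in> {p,q}")
        case True
        then show ?thesis using ky yz(3) kp kq by auto
      next
        case F2: False
        then have "k z = g z" using ko by simp
        then have "g y = g z" using ky(1) yz(3) by simp
        moreover have "y \<in> verts H - {p,q}" "z \<in> verts H - {p,q}" using yz F2 False by auto
        ultimately show ?thesis using inj_onD[OF ginj] by blast
      qed
    qed
  qed
  moreover have "k ` verts H = verts T"
  proof
    show "k ` verts H \<subseteq> verts T" using gin st pq by (auto simp: k_def)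
    show "verts T \<subseteq> k ` verts H"
    proof
      fix w assume w: "w \<in> verts T"
      show "w \<in> k ` verts H"
      proof (cases "w \<in> {s,t}")
        case True then show ?thesis using pq unfolding k_def by (auto intro: image_eqI[of _ _ p] image_eqI[of _ _ q])
      next
        case False
        then obtain y where "y \<in> verts H - {p,q}" "w = g y" using gsurj w by blast
        then show ?thesis unfolding k_def by (auto intro!: image_eqI[of _ _ y])
      qed
    qed
  qed
  ultimately have bij: "bij_betw k (verts H) (verts T)" unfolding bij_betw_def by blast
  have E: "{y,z} \<in> edges H \<longleftrightarrow> {k y, k z} \<in> edges T" if yz: "y \<in> verts H" "z \<in> verts H" for y z
  proof (cases "y = z")
    case True then show ?thesis using wfe_loop[OF wH] wfe_loop[OF wT] by simp
  next
    case False
    show ?thesis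
    proof (cases "y \<in> {p,q}"; cases "z \<in> {p,q}")
      assume "y \<in> {p,q}" "z \<in> {p,q}"
      then show ?thesis using False e pq st by (auto simp: k_def insert_commute)
    next
      assume a: "y \<in> {p,q}" "z \<notin> {p,q}"
      then show ?thesis using ps qt yz pq by (auto simp: k_def)
    next
      assume a: "y \<notin> {p,q}" "z \<in> {p,q}"
      then show ?thesis using ps qt yz pq by (auto simp: k_def insert_commute)
    next
      assume a: "y \<notin> {p,q}" "z \<notin> {p,q}"
      then show ?thesis using off yz by (auto simp: k_def)
    qed
  qed
  have L: "k (lab H x) = lab T x" if "x \<in> X" for x
    using that lp lq lo pq by (auto simp: k_def)
  show ?thesis unfolding iso_def using bij E L by blast
qed



lemma comb4:
  fixes P Q Au Av :: "nat set"
  assumes "card P = 2" "card Q = 2" "card Au = 2" "card Av = 2"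
    "P \<inter> Q = {}" "Au \<inter> Av = {}" "P \<union> Q = Au \<union> Av"
  shows "(P = Au \<and> Q = Av) \<or> (P = Av \<and> Q = Au) \<or>
         (\<exists>b\<in>Au. \<exists>c\<in>Av. P = (Au - {b}) \<union> {c} \<and> Q = (Av - {c}) \<union> {b})"
proof -
  have fin: "finite P" "finite Au" "finite Av" using assms(1,3,4) by (metis card.infinite zero_neq_numeral)+
  have Qeq: "Q = (Au \<union> Av) - P" using assms(5,7) by blast
  have PU: "P \<subseteq> Au \<union> Av" using assms(7) by blast
  show ?thesis
  proof (cases "P \<inter> Au = {}")
    case True
    then have "P \<subseteq> Av" using PU by blast
    then have "P = Av" using fin assms(1,4) by (simp add: card_subset_eq)
    then show ?thesis using Qeq assms(6) by blast
  next
    case False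
    show ?thesis
    proof (cases "Au \<subseteq> P")
      case True
      then have "P = Au" using fin assms(1,3) by (metis card_subset_eq)
      then show ?thesis using Qeq assms(6) by blast
    next
      case F2: False
      obtain a' where a': "a' \<in> P" "a' \<in> Au" using False by blast
      obtain b where b: "b \<in> Au" "b \<notin> P" using F2 by blast
      have ab: "a' \<noteq> b" using a' b by blast
      obtain p1 p2 where pp: "Au = {p1,p2}" "p1 \<noteq> p2" using assms(3) card_2_iff by metis
      have Au2: "Au = {a',b}" using pp a' b ab by blast
      obtain q1 q2 where qq: "P = {q1,q2}" "q1 \<noteq> q2" using assms(1) card_2_iff by metis
      define x where "x = (if a' = q1 then q2 else q1)"
      have x: "P = {a', x}" "x \<noteq> a'" using qq a' unfolding x_def by auto
      have "x \<in> Av" using x Au2 b PU by blast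
      moreover have "P = (Au - {b}) \<union> {x}" using x Au2 ab by blast
      moreover have "Q = (Av - {x}) \<union> {b}" using Qeq x Au2 ab b(2) assms(6) by blast
      ultimately show ?thesis using b(1) by blast
    qed
  qed
qed



lemma nni_verts[simp]: "verts (nni_result C u v b c) = verts C"
  and nni_lab[simp]: "lab (nni_result C u v b c) = lab C"
  and nni_edges: "edges (nni_result C u v b c) = (edges C - {{u, b}, {v, c}}) \<union> {{u, c}, {v, b}}"
  by (simp_all add: nni_result_def verts_def lab_def edges_def)

lemma nni_facts:
  assumes w: "wfe C" and uv: "{u,v} \<in> edges C" and b: "{u,b} \<in> edges C" "b \<noteq> v"
    and c: "{v,c} \<in> edges C" "c \<noteq> u"
  shows "wfe (nni_result C u v b c)"
    "\<And>y z. y \<notin> {u,v} \<Longrightarrow> z \<notin> {u,v} \<Longrightarrow> {y,z} \<in> edges (nni_result C u v b c) \<longleftrightarrow> {y,z} \<in> edges C"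
    "{u,v} \<in> edges (nni_result C u v b c)"
    "\<And>y. y \<notin> {u,v} \<Longrightarrow> {u,y} \<in> edges (nni_result C u v b c) \<longleftrightarrow> ({u,y} \<in> edges C \<and> y \<noteq> b) \<or> y = c"
    "\<And>y. y \<notin> {u,v} \<Longrightarrow> {v,y} \<in> edges (nni_result C u v b c) \<longleftrightarrow> ({v,y} \<in> edges C \<and> y \<noteq> c) \<or> y = b"
proof -
  have f: "u \<noteq> v" "u \<in> verts C" "v \<in> verts C" "b \<in> verts C" "c \<in> verts C" "u \<noteq> b" "v \<noteq> c"
    using wfe_edge[OF w] uv b c by blast+
  show "wfe (nni_result C u v b c)" using w f c(2) b(2) unfolding wfe_def nni_edges by auto
  show "\<And>y z. y \<notin> {u,v} \<Longrightarrow> z \<notin> {u,v} \<Longrightarrow> {y,z} \<in> edges (nni_result C u v b c) \<longleftrightarrow> {y,z} \<in> edges C"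
    unfolding nni_edges by (auto simp: doubleton_eq_iff)
  show "{u,v} \<in> edges (nni_result C u v b c)" using uv f b(2) c(2) unfolding nni_edges
    by (auto simp: doubleton_eq_iff)
  show "\<And>y. y \<notin> {u,v} \<Longrightarrow> {u,y} \<in> edges (nni_result C u v b c) \<longleftrightarrow> ({u,y} \<in> edges C \<and> y \<noteq> b) \<or> y = c"
    using f b(2) c(2) unfolding nni_edges by (auto simp: doubleton_eq_iff)
  show "\<And>y. y \<notin> {u,v} \<Longrightarrow> {v,y} \<in> edges (nni_result C u v b c) \<longleftrightarrow> ({v,y} \<in> edges C \<and> y \<noteq> c) \<or> y = b"
    using f b(2) c(2) unfolding nni_edges by (auto simp: doubleton_eq_iff)
qed



lemma lab_one: assumes "\<forall>x\<in>X. lab H x \<in> {p,q} \<longrightarrow> x = x0" "lab H x0 = r" "r \<in> {p,q}" "lab G x0 = s"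
  shows "\<forall>x\<in>X. lab H x = r \<longrightarrow> lab G x = s"
proof (intro ballI impI)
  fix x assume "x \<in> X" "lab H x = r"
  then have "x = x0" using assms(1,3) by auto
  then show "lab G x = s" using assms(4) by simp
qed

lemma lab_none: assumes "\<forall>x\<in>X. lab H x \<in> {p,q} \<longrightarrow> x = x0" "lab H x0 \<noteq> r" "r \<in> {p,q}"
  shows "\<forall>x\<in>X. lab H x = r \<longrightarrow> P x"
proof (intro ballI impI)
  fix x assume "x \<in> X" "lab H x = r"
  then have "x = x0" using assms(1,3) by auto
  then show "P x" using assms(2) \<open>lab H x = r\<close> by simp
qed

lemma lab_two: assumes "\<forall>x\<in>X. lab H x \<in> {p,q} \<longrightarrow> x = x1 \<or> x = x2" "lab H x1 = r" "lab H x2 \<noteq> r"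
    "r \<in> {p,q}" "lab G x1 = s"
  shows "\<forall>x\<in>X. lab H x = r \<longrightarrow> lab G x = s"
proof (intro ballI impI)
  fix x assume "x \<in> X" "lab H x = r"
  then have "x = x1 \<or> x = x2" using assms(1,4) by auto
  then have "x = x1" using assms(3) \<open>lab H x = r\<close> by auto
  then show "lab G x = s" using assms(5) by simp
qed

lemma contr_contr:
  assumes G: "in_CX X G" and H: "in_CX X H" and uvE: "{u,v} \<in> edges G" and pqE: "{p,q} \<in> edges H"
    and I: "iso X (contract G u v) (contract H p q)" and ni: "\<not> iso X G H"
  shows "nni_over X G u v H"
proof -
  define W1 where "W1 = contract G u v"
  define W2 where "W2 = contract H p q"
  have wG: "wfe G" "wf_graph X G" using cx_wfe[OF G] cx_wf[OF G] by auto
  have wH: "wfe H" "wf_graph X H" using cx_wfe[OF H] cx_wf[OF H] by auto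
  have wW1: "wf_graph X W1" unfolding W1_def using wf_graph_contract[OF wG(2) uvE] .
  have wW2: "wf_graph X W2" unfolding W2_def using wf_graph_contract[OF wH(2) pqE] .
  have uv: "u \<noteq> v" "u \<in> verts G" "v \<in> verts G" using wfe_edge[OF wG(1) uvE] by auto
  have pq: "p \<noteq> q" "p \<in> verts H" "q \<in> verts H" using wfe_edge[OF wH(1) pqE] by auto
  obtain h where h: "bij_betw h (verts W1) (verts W2)"
    "\<forall>a \<in> verts W1. \<forall>b \<in> verts W1. {a, b} \<in> edges W1 \<longleftrightarrow> {h a, h b} \<in> edges W2"
    "\<forall>x \<in> X. h (lab W1 x) = lab W2 x" using I unfolding iso_def W1_def W2_def by blast
  have uW1: "u \<in> verts W1" using uv by (simp add: W1_def)
  have hu: "h u = p"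
  proof (rule ccontr)
    assume a: "h u \<noteq> p"
    have "h u \<in> verts W2" using h(1) uW1 by (meson bij_betwE)
    then have "h u \<in> verts H" "h u \<notin> {p,q}" using a by (auto simp: W2_def)
    then have "good X W2 (h u)" using cx_good_contract[OF H pqE] by (simp add: W2_def)
    then have "good X W1 u" using iso_good[OF h wW1 wW2 uW1] by simp
    then show False using cx_bad_u[OF G uvE] by (simp add: W1_def)
  qed
  define g where "g = inv_into (verts W1) h"
  have gb: "bij_betw g (verts W2) (verts W1)" unfolding g_def using bij_betw_inv_into[OF h(1)] .
  have hg: "h (g y) = y" if "y \<in> verts W2" for y
    unfolding g_def using h(1) that by (meson bij_betw_inv_into_right)
  have gh: "g (h y) = y" if "y \<in> verts W1" for y
    unfolding g_def using h(1) that by (meson bij_betw_inv_into_left)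
  have gp: "g p = u" using gh[OF uW1] hu by simp
  define D where "D = verts H - {p,q}"
  have gD: "bij_betw g D (verts G - {u,v})"
  proof -
    have "bij_betw g (verts W2 - {p}) (verts W1 - {u})"
      using bij_betw_DiffI[OF gb, of "{p}" "{u}"] gp uW1 pq by (auto simp: W2_def)
    moreover have "verts W2 - {p} = D" "verts W1 - {u} = verts G - {u,v}"
      by (auto simp: W2_def W1_def D_def)
    ultimately show ?thesis by simp
  qed
  have gin: "g z \<in> verts G" "g z \<notin> {u,v}" if "z \<in> D" for z
    using gD that by (meson bij_betwE DiffD1 DiffD2)+
  have ginj: "inj_on g D" using gD unfolding bij_betw_def by blast
  have DW2: "z \<in> verts W2" if "z \<in> D" for z using that by (auto simp: D_def W2_def)
  have gW1: "g z \<in> verts W1" if "z \<in> D" for z using gin[OF that] by (auto simp: W1_def)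
  have off: "\<forall>y\<in>D. \<forall>z\<in>D. {y,z} \<in> edges H \<longleftrightarrow> {g y, g z} \<in> edges G"
  proof (intro ballI)
    fix y z assume yz: "y \<in> D" "z \<in> D"
    have "{y,z} \<in> edges H \<longleftrightarrow> {y,z} \<in> edges W2"
      using contract_edge_off[OF wH(1) pqE, of y z] yz by (auto simp: D_def W2_def)
    also have "\<dots> \<longleftrightarrow> {g y, g z} \<in> edges W1" using h(2) gW1 yz hg DW2 by metis
    also have "\<dots> \<longleftrightarrow> {g y, g z} \<in> edges G"
      using contract_edge_off[OF wG(1) uvE, of "g y" "g z"] gin yz by (simp add: W1_def)
    finally show "{y,z} \<in> edges H \<longleftrightarrow> {g y, g z} \<in> edges G" .
  qed
  have nb: "({p,z} \<in> edges H \<or> {q,z} \<in> edges H) \<longleftrightarrow> ({u, g z} \<in> edges G \<or> {v, g z} \<in> edges G)"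
    if z: "z \<in> D" for z
  proof -
    have "({p,z} \<in> edges H \<or> {q,z} \<in> edges H) \<longleftrightarrow> {p,z} \<in> edges W2"
      using contract_edge_u[OF wH(1) pqE, of z] z by (auto simp: D_def W2_def)
    also have "\<dots> \<longleftrightarrow> {u, g z} \<in> edges W1" using h(2) gW1[OF z] uW1 hu hg[OF DW2[OF z]] by metis
    also have "\<dots> \<longleftrightarrow> ({u, g z} \<in> edges G \<or> {v, g z} \<in> edges G)"
      using contract_edge_u[OF wG(1) uvE, of "g z"] gin[OF z] by (simp add: W1_def)
    finally show ?thesis .
  qed
  have labG: "lab G x \<in> verts G" if "x \<in> X" for x using wG(2) that unfolding wf_graph_def by auto
  have lab2: "lab H x \<in> {p,q} \<longleftrightarrow> lab G x \<in> {u,v}" if x: "x \<in> X" for x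
  proof -
    have l1: "lab W1 x \<in> verts W1" using wW1 x unfolding wf_graph_def by auto
    have "lab H x \<in> {p,q} \<longleftrightarrow> lab W2 x = p" using pq(1) by (auto simp: W2_def contract_lab rr_def)
    also have "\<dots> \<longleftrightarrow> h (lab W1 x) = h u" using h(3) x hu by simp
    also have "\<dots> \<longleftrightarrow> lab W1 x = u" using h(1) l1 uW1 unfolding bij_betw_def inj_on_def by blast
    also have "\<dots> \<longleftrightarrow> lab G x \<in> {u,v}" using uv(1) by (auto simp: W1_def contract_lab rr_def)
    finally show ?thesis .
  qed
  have lab1: "lab G x = g (lab H x)" if x: "x \<in> X" "lab H x \<notin> {p,q}" for x
  proof -
    have a: "lab G x \<notin> {u,v}" using lab2 x by blast
    have "lab W2 x = lab H x" using x(2) by (auto simp: W2_def contract_lab rr_def)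
    moreover have "lab W1 x = lab G x" using a by (auto simp: W1_def contract_lab rr_def)
    moreover have "lab G x \<in> verts W1" using a labG[OF x(1)] by (auto simp: W1_def)
    ultimately show ?thesis using h(3) x(1) gh by metis
  qed
  have LL: "labs X G u \<union> labs X G v = labs X H p \<union> labs X H q"
    using lab2 unfolding labs_def by blast
  have toG: "iso X H G" if st: "s \<in> {u,v}" "t \<in> {u,v}" "s \<noteq> t"
    and ps: "\<forall>z\<in>D. {p,z} \<in> edges H \<longleftrightarrow> {s, g z} \<in> edges G"
    and qt: "\<forall>z\<in>D. {q,z} \<in> edges H \<longleftrightarrow> {t, g z} \<in> edges G"
    and lp: "\<forall>x\<in>X. lab H x = p \<longrightarrow> lab G x = s"
    and lq: "\<forall>x\<in>X. lab H x = q \<longrightarrow> lab G x = t" for s t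
  proof -
    have e: "{s,t} = {u,v}" using st by auto
    show ?thesis
    proof (rule build_iso[OF wH(1) wG(1) pq, of s t g])
      show "bij_betw g (verts H - {p,q}) (verts G - {s,t})" using gD e by (simp add: D_def)
    qed (use st e uv pq off ps qt lp lq lab1 uvE pqE in \<open>auto simp: D_def\<close>)
  qed
  have contra: False if "iso X H G" using iso_sym[OF that wH(2) wG(2)] ni by simp
  define A where "A = nbrs H p - {q}"
  define B where "B = nbrs H q - {p}"
  define Au where "Au = nbrs G u - {v}"
  define Av where "Av = nbrs G v - {u}"
  have memAu: "{u,y} \<in> edges G \<longleftrightarrow> y \<in> Au" if "y \<notin> {u,v}" for y
    using that by (auto simp: Au_def nbrs_def)
  have memAv: "{v,y} \<in> edges G \<longleftrightarrow> y \<in> Av" if "y \<notin> {u,v}" for y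
    using that by (auto simp: Av_def nbrs_def)
  have AD: "A \<subseteq> D" "B \<subseteq> D" using nbrs_sub[OF wH(1), of p] nbrs_sub[OF wH(1), of q]
    by (auto simp: A_def B_def D_def)
  have memA: "{p,z} \<in> edges H \<longleftrightarrow> g z \<in> g ` A" if z: "z \<in> D" for z
  proof -
    have "{p,z} \<in> edges H \<longleftrightarrow> z \<in> A" using z by (auto simp: A_def D_def nbrs_def)
    also have "\<dots> \<longleftrightarrow> g z \<in> g ` A" using inj_on_image_mem_iff[OF ginj z AD(1)] by simp
    finally show ?thesis .
  qed
  have memB: "{q,z} \<in> edges H \<longleftrightarrow> g z \<in> g ` B" if z: "z \<in> D" for z
  proof -
    have "{q,z} \<in> edges H \<longleftrightarrow> z \<in> B" using z by (auto simp: B_def D_def nbrs_def)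
    also have "\<dots> \<longleftrightarrow> g z \<in> g ` B" using inj_on_image_mem_iff[OF ginj z AD(2)] by simp
    finally show ?thesis .
  qed
  have vuE: "{v,u} \<in> edges G" using uvE by (simp add: insert_commute)
  have qpE: "{q,p} \<in> edges H" using pqE by (simp add: insert_commute)
  have Gleaf_u: "{u,y} \<notin> edges G" if "labs X G u \<noteq> {}" "y \<noteq> v" for y
  proof -
    have "y \<notin> nbrs G u" using cx_leaf_nbrs[OF G uvE that(1)] that(2) by simp
    then show ?thesis by (simp add: nbrs_def)
  qed
  have Gleaf_v: "{v,y} \<notin> edges G" if "labs X G v \<noteq> {}" "y \<noteq> u" for y
  proof -
    have "y \<notin> nbrs G v" using cx_leaf_nbrs[OF G vuE that(1)] that(2) by simp
    then show ?thesis by (simp add: nbrs_def)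
  qed
  have Hleaf_p: "{p,y} \<notin> edges H" if "labs X H p \<noteq> {}" "y \<noteq> q" for y
  proof -
    have "y \<notin> nbrs H p" using cx_leaf_nbrs[OF H pqE that(1)] that(2) by simp
    then show ?thesis by (simp add: nbrs_def)
  qed
  have Hleaf_q: "{q,y} \<notin> edges H" if "labs X H q \<noteq> {}" "y \<noteq> p" for y
  proof -
    have "y \<notin> nbrs H q" using cx_leaf_nbrs[OF H qpE that(1)] that(2) by simp
    then show ?thesis by (simp add: nbrs_def)
  qed
  have Dn: "z \<noteq> p" "z \<noteq> q" if "z \<in> D" for z using that by (auto simp: D_def)
  have nbA: "\<forall>z\<in>D. ({p,z} \<in> edges H \<or> {q,z} \<in> edges H) \<longleftrightarrow> ({u, g z} \<in> edges G \<or> {v, g z} \<in> edges G)"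
  proof (intro ballI)
    fix z assume "z \<in> D" then show "({p,z} \<in> edges H \<or> {q,z} \<in> edges H) \<longleftrightarrow> ({u, g z} \<in> edges G \<or> {v, g z} \<in> edges G)"
      by (rule nb)
  qed
  have HpD: "\<forall>z\<in>D. {p,z} \<notin> edges H" if lp: "labs X H p \<noteq> {}"
  proof (intro ballI)
    fix z assume "z \<in> D" then show "{p,z} \<notin> edges H" using Hleaf_p[OF lp, of z] Dn by blast
  qed
  have HqD: "\<forall>z\<in>D. {q,z} \<notin> edges H" if lq: "labs X H q \<noteq> {}"
  proof (intro ballI)
    fix z assume "z \<in> D" then show "{q,z} \<notin> edges H" using Hleaf_q[OF lq, of z] Dn by blast
  qed
  have GuD: "\<forall>z\<in>D. {u, g z} \<notin> edges G" if lu: "labs X G u \<noteq> {}"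
  proof (intro ballI)
    fix z assume "z \<in> D" then show "{u, g z} \<notin> edges G" using Gleaf_u[OF lu, of "g z"] gin by blast
  qed
  have GvD: "\<forall>z\<in>D. {v, g z} \<notin> edges G" if lv: "labs X G v \<noteq> {}"
  proof (intro ballI)
    fix z assume "z \<in> D" then show "{v, g z} \<notin> edges G" using Gleaf_v[OF lv, of "g z"] gin by blast
  qed
  show ?thesis
  proof (cases "labs X G u = {}"; cases "labs X G v = {}")
    assume a: "labs X G u = {}" "labs X G v = {}"
    have aH: "labs X H p = {}" "labs X H q = {}" using LL a by auto
    have cA: "card A = 2" "card B = 2"
      using cx_nbrs_contract_u(3,4)[OF H pqE] cx_deg_unlab[OF H] aH pq by (auto simp: A_def B_def)
    have cAu: "card Au = 2" "card Av = 2"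
      using cx_nbrs_contract_u(3,4)[OF G uvE] cx_deg_unlab[OF G] a uv by (auto simp: Au_def Av_def)
    have dAB: "A \<inter> B = {}" using cx_nbrs_contract_u(2)[OF H pqE] by (simp add: A_def B_def)
    have dAu: "Au \<inter> Av = {}" using cx_nbrs_contract_u(2)[OF G uvE] by (simp add: Au_def Av_def)
    have cgA: "card (g ` A) = 2" "card (g ` B) = 2"
      using cA AD ginj by (metis card_image inj_on_subset)+
    have dg: "g ` A \<inter> g ` B = {}" using dAB AD ginj unfolding inj_on_def by blast
    have ug: "g ` A \<union> g ` B = Au \<union> Av"
    proof
      show "g ` A \<union> g ` B \<subseteq> Au \<union> Av"
      proof
        fix y assume "y \<in> g ` A \<union> g ` B"
        then obtain z where z: "z \<in> A \<union> B" "y = g z" by blast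
        then have zD: "z \<in> D" using AD by auto
        have "{p,z} \<in> edges H \<or> {q,z} \<in> edges H" using z(1) by (auto simp: A_def B_def nbrs_def)
        then show "y \<in> Au \<union> Av" using nb[OF zD] memAu memAv gin[OF zD] z(2) by blast
      qed
      show "Au \<union> Av \<subseteq> g ` A \<union> g ` B"
      proof
        fix y assume y: "y \<in> Au \<union> Av"
        then have "y \<in> verts G - {u,v}" using nbrs_sub[OF wG(1)] by (auto simp: Au_def Av_def)
        then obtain z where z: "z \<in> D" "y = g z" using gD by (metis bij_betw_imp_surj_on imageE)
        have "{u, g z} \<in> edges G \<or> {v, g z} \<in> edges G" using y z memAu memAv gin[OF z(1)] by blast
        then have "{p,z} \<in> edges H \<or> {q,z} \<in> edges H" using nb[OF z(1)] by blast
        then show "y \<in> g ` A \<union> g ` B" using z memA memB by blast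
      qed
    qed
    have nolab: "\<forall>x\<in>X. lab H x \<noteq> p \<and> lab H x \<noteq> q" using aH by (auto simp: labs_def)
    consider "g ` A = Au \<and> g ` B = Av" | "g ` A = Av \<and> g ` B = Au"
      | "\<exists>b\<in>Au. \<exists>c\<in>Av. g ` A = (Au - {b}) \<union> {c} \<and> g ` B = (Av - {c}) \<union> {b}"
      using comb4[OF cgA cAu dg dAu ug] by blast
    then show ?thesis
    proof cases
      case 1
      have "iso X H G"
        by (rule toG[of u v]) (use 1 uv memA memB memAu memAv gin nolab in auto)
      then show ?thesis using contra by blast
    next
      case 2
      have "iso X H G"
        by (rule toG[of v u]) (use 2 uv memA memB memAu memAv gin nolab in auto)
      then show ?thesis using contra by blast
    next
      case 3
      then obtain b c where bc: "b \<in> Au" "c \<in> Av" "g ` A = (Au - {b}) \<union> {c}" "g ` B = (Av - {c}) \<union> {b}"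
        by blast
      have b: "{u,b} \<in> edges G" "b \<noteq> v" using bc(1) by (auto simp: Au_def nbrs_def)
      have c: "{v,c} \<in> edges G" "c \<noteq> u" using bc(2) by (auto simp: Av_def nbrs_def)
      note NF = nni_facts[OF wG(1) uvE b c]
      have iu: "internal_vertex X G u" "internal_vertex X G v"
        using a uv by (auto simp: internal_vertex_def labeled_labs)
      have "iso X H (nni_result G u v b c)"
      proof (rule build_iso[OF wH(1) NF(1) pq, of u v g])
        show "bij_betw g (verts H - {p,q}) (verts (nni_result G u v b c) - {u,v})"
          using gD by (simp add: D_def)
        show "\<forall>y\<in>verts H - {p,q}. \<forall>z\<in>verts H - {p,q}.
            {y,z} \<in> edges H \<longleftrightarrow> {g y, g z} \<in> edges (nni_result G u v b c)"
          using off NF(2) gin unfolding D_def by blast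
        show "\<forall>z\<in>verts H - {p,q}. {p,z} \<in> edges H \<longleftrightarrow> {u, g z} \<in> edges (nni_result G u v b c)"
        proof
          fix z assume z: "z \<in> verts H - {p,q}"
          then have zD: "z \<in> D" by (simp add: D_def)
          show "{p,z} \<in> edges H \<longleftrightarrow> {u, g z} \<in> edges (nni_result G u v b c)"
            using memA[OF zD] bc(3) NF(4)[OF gin(2)[OF zD]] memAu[OF gin(2)[OF zD]] by auto
        qed
        show "\<forall>z\<in>verts H - {p,q}. {q,z} \<in> edges H \<longleftrightarrow> {v, g z} \<in> edges (nni_result G u v b c)"
        proof
          fix z assume z: "z \<in> verts H - {p,q}"
          then have zD: "z \<in> D" by (simp add: D_def)
          show "{q,z} \<in> edges H \<longleftrightarrow> {v, g z} \<in> edges (nni_result G u v b c)"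
            using memB[OF zD] bc(4) NF(5)[OF gin(2)[OF zD]] memAv[OF gin(2)[OF zD]] by auto
        qed
      qed (use uv pqE NF(3) nolab lab1 in auto)
      then show ?thesis unfolding nni_over_def using uvE iu b c by blast
    qed
  next
    assume a: "labs X G u = {}" "labs X G v \<noteq> {}"
    then obtain x0 where x0: "labs X G v = {x0}" using cx_labs_le1[OF G] by blast
    have LH: "labs X H p \<union> labs X H q = {x0}" using LL a x0 by simp
    have x0X: "x0 \<in> X" "lab G x0 = v" using x0 by (auto simp: labs_def)
    have only: "\<forall>x\<in>X. lab H x \<in> {p,q} \<longrightarrow> x = x0" using LH by (auto simp: labs_def)
    have hx0: "lab H x0 \<in> {p,q}" using LH x0X by (auto simp: labs_def)
    show ?thesis
    proof (cases "lab H x0 = p")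
      case True
      have lp: "labs X H p \<noteq> {}" using True x0X by (auto simp: labs_def)
      have "iso X H G"
      proof (rule toG[of v u])
        show "\<forall>z\<in>D. {p,z} \<in> edges H \<longleftrightarrow> {v, g z} \<in> edges G"
          using HpD[OF lp] GvD[OF a(2)] by blast
        show "\<forall>z\<in>D. {q,z} \<in> edges H \<longleftrightarrow> {u, g z} \<in> edges G"
          using HpD[OF lp] GvD[OF a(2)] nbA by blast
        show "v \<in> {u,v}" "u \<in> {u,v}" "v \<noteq> u" using uv(1) by auto
        show "\<forall>x\<in>X. lab H x = p \<longrightarrow> lab G x = v" by (rule lab_one[OF only True _ x0X(2)]) simp
        show "\<forall>x\<in>X. lab H x = q \<longrightarrow> lab G x = u" by (rule lab_none[OF only]) (use True pq(1) in auto)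
      qed
      then show ?thesis using contra by blast
    next
      case False
      then have F: "lab H x0 = q" using hx0 by auto
      have lq: "labs X H q \<noteq> {}" using F x0X by (auto simp: labs_def)
      have "iso X H G"
      proof (rule toG[of u v])
        show "\<forall>z\<in>D. {q,z} \<in> edges H \<longleftrightarrow> {v, g z} \<in> edges G"
          using HqD[OF lq] GvD[OF a(2)] by blast
        show "\<forall>z\<in>D. {p,z} \<in> edges H \<longleftrightarrow> {u, g z} \<in> edges G"
          using HqD[OF lq] GvD[OF a(2)] nbA by blast
        show "u \<in> {u,v}" "v \<in> {u,v}" "u \<noteq> v" using uv(1) by auto
        show "\<forall>x\<in>X. lab H x = q \<longrightarrow> lab G x = v" by (rule lab_one[OF only F _ x0X(2)]) simp
        show "\<forall>x\<in>X. lab H x = p \<longrightarrow> lab G x = u" by (rule lab_none[OF only]) (use F pq(1) in auto)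
      qed
      then show ?thesis using contra by blast
    qed
  next
    assume a: "labs X G u \<noteq> {}" "labs X G v = {}"
    then obtain x0 where x0: "labs X G u = {x0}" using cx_labs_le1[OF G] by blast
    have LH: "labs X H p \<union> labs X H q = {x0}" using LL a x0 by simp
    have x0X: "x0 \<in> X" "lab G x0 = u" using x0 by (auto simp: labs_def)
    have only: "\<forall>x\<in>X. lab H x \<in> {p,q} \<longrightarrow> x = x0" using LH by (auto simp: labs_def)
    have hx0: "lab H x0 \<in> {p,q}" using LH x0X by (auto simp: labs_def)
    show ?thesis
    proof (cases "lab H x0 = p")
      case True
      have lp: "labs X H p \<noteq> {}" using True x0X by (auto simp: labs_def)
      have "iso X H G"
      proof (rule toG[of u v])
        show "\<forall>z\<in>D. {p,z} \<in> edges H \<longleftrightarrow> {u, g z} \<in> edges G"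
          using HpD[OF lp] GuD[OF a(1)] by blast
        show "\<forall>z\<in>D. {q,z} \<in> edges H \<longleftrightarrow> {v, g z} \<in> edges G"
          using HpD[OF lp] GuD[OF a(1)] nbA by blast
        show "u \<in> {u,v}" "v \<in> {u,v}" "u \<noteq> v" using uv(1) by auto
        show "\<forall>x\<in>X. lab H x = p \<longrightarrow> lab G x = u" by (rule lab_one[OF only True _ x0X(2)]) simp
        show "\<forall>x\<in>X. lab H x = q \<longrightarrow> lab G x = v" by (rule lab_none[OF only]) (use True pq(1) in auto)
      qed
      then show ?thesis using contra by blast
    next
      case False
      then have F: "lab H x0 = q" using hx0 by auto
      have lq: "labs X H q \<noteq> {}" using F x0X by (auto simp: labs_def)
      have "iso X H G"
      proof (rule toG[of v u])
        show "\<forall>z\<in>D. {q,z} \<in> edges H \<longleftrightarrow> {u, g z} \<in> edges G"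
          using HqD[OF lq] GuD[OF a(1)] by blast
        show "\<forall>z\<in>D. {p,z} \<in> edges H \<longleftrightarrow> {v, g z} \<in> edges G"
          using HqD[OF lq] GuD[OF a(1)] nbA by blast
        show "v \<in> {u,v}" "u \<in> {u,v}" "v \<noteq> u" using uv(1) by auto
        show "\<forall>x\<in>X. lab H x = q \<longrightarrow> lab G x = u" by (rule lab_one[OF only F _ x0X(2)]) simp
        show "\<forall>x\<in>X. lab H x = p \<longrightarrow> lab G x = v" by (rule lab_none[OF only]) (use F pq(1) in auto)
      qed
      then show ?thesis using contra by blast
    qed
  next
    assume a: "labs X G u \<noteq> {}" "labs X G v \<noteq> {}"
    then obtain x1 x2 where x: "labs X G u = {x1}" "labs X G v = {x2}" using cx_labs_le1[OF G] by meson
    have xX: "x1 \<in> X" "x2 \<in> X" "lab G x1 = u" "lab G x2 = v" using x by (auto simp: labs_def)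
    have LH: "labs X H p \<union> labs X H q = {x1,x2}" using LL x by auto
    have only: "\<forall>x\<in>X. lab H x \<in> {p,q} \<longrightarrow> x = x1 \<or> x = x2" using LH by (auto simp: labs_def)
    have h1: "lab H x1 \<in> {p,q}" "lab H x2 \<in> {p,q}" using LH xX by (auto simp: labs_def)
    have d12: "lab H x1 \<noteq> lab H x2" using xX uv(1) H unfolding in_CX_def inj_on_def by metis
    have noadj: "\<forall>z\<in>D. {p,z} \<notin> edges H \<and> {q,z} \<notin> edges H"
      using nbA GuD[OF a(1)] GvD[OF a(2)] by blast
    have noadjG: "\<forall>z\<in>D. {u, g z} \<notin> edges G \<and> {v, g z} \<notin> edges G"
      using GuD[OF a(1)] GvD[OF a(2)] by blast
    show ?thesis
    proof (cases "lab H x1 = p")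
      case True
      then have x2q: "lab H x2 = q" using h1 d12 by auto
      have "iso X H G"
      proof (rule toG[of u v])
        show "u \<in> {u,v}" "v \<in> {u,v}" "u \<noteq> v" using uv(1) by auto
        show "\<forall>z\<in>D. {p,z} \<in> edges H \<longleftrightarrow> {u, g z} \<in> edges G" using noadj noadjG by blast
        show "\<forall>z\<in>D. {q,z} \<in> edges H \<longleftrightarrow> {v, g z} \<in> edges G" using noadj noadjG by blast
        show "\<forall>x\<in>X. lab H x = p \<longrightarrow> lab G x = u"
          by (rule lab_two[OF only True _ _ xX(3)]) (use x2q pq(1) in auto)
        show "\<forall>x\<in>X. lab H x = q \<longrightarrow> lab G x = v"
        proof (rule lab_two[OF _ x2q _ _ xX(4)])
          show "\<forall>x\<in>X. lab H x \<in> {p,q} \<longrightarrow> x = x2 \<or> x = x1" using only by blast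
        qed (use True pq(1) in auto)
      qed
      then show ?thesis using contra by blast
    next
      case False
      then have x12: "lab H x1 = q" "lab H x2 = p" using h1 d12 by auto
      have "iso X H G"
      proof (rule toG[of v u])
        show "v \<in> {u,v}" "u \<in> {u,v}" "v \<noteq> u" using uv(1) by auto
        show "\<forall>z\<in>D. {p,z} \<in> edges H \<longleftrightarrow> {v, g z} \<in> edges G" using noadj noadjG by blast
        show "\<forall>z\<in>D. {q,z} \<in> edges H \<longleftrightarrow> {u, g z} \<in> edges G" using noadj noadjG by blast
        show "\<forall>x\<in>X. lab H x = q \<longrightarrow> lab G x = u"
          by (rule lab_two[OF only x12(1) _ _ xX(3)]) (use x12 pq(1) in auto)
        show "\<forall>x\<in>X. lab H x = p \<longrightarrow> lab G x = v"
        proof (rule lab_two[OF _ x12(2) _ _ xX(4)])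
          show "\<forall>x\<in>X. lab H x \<in> {p,q} \<longrightarrow> x = x2 \<or> x = x1" using only by blast
        qed (use x12 pq(1) in auto)
      qed
      then show ?thesis using contra by blast
    qed
  qed
qed



lemma successively_mono_set: assumes "successively P xs" "\<And>a b. a \<in> set xs \<Longrightarrow> b \<in> set xs \<Longrightarrow> P a b \<Longrightarrow> Q a b"
  shows "successively Q xs"
  using assms by (induction P xs rule: successively.induct) auto

lemma contract_acyclic:
  assumes w: "wfe G" and uvE: "{u,v} \<in> edges G" and ac: "\<not> has_cycle G"
  shows "\<not> has_cycle (contract G u v)"
proof
  assume "has_cycle (contract G u v)"
  then obtain vs where vs: "cyc (contract G u v) vs" using has_cycle_cyc by blast
  have uv: "u \<noteq> v" "u \<in> verts G" "v \<in> verts G" using wfe_edge[OF w uvE] by auto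
  let ?EW = "\<lambda>a b. {a,b} \<in> edges (contract G u v)"
  let ?EG = "\<lambda>a b. {a,b} \<in> edges G"
  have lift: "?EG a b" if "?EW a b" "a \<noteq> u" "b \<noteq> u" "a \<noteq> v" "b \<noteq> v" for a b
    using contract_edge_off[OF w uvE, of a b] that by simp
  show False
  proof (cases "u \<in> set vs")
    case False
    have sv: "set (vs @ [hd vs]) \<subseteq> set vs" using vs unfolding cyc_def by (cases vs) auto
    have nv: "v \<notin> set vs" using vs unfolding cyc_def by auto
    have "successively ?EG (vs @ [hd vs])"
    proof (rule successively_mono_set)
      show "successively ?EW (vs @ [hd vs])" using vs unfolding cyc_def by blast
    next
      fix a b assume ab: "a \<in> set (vs @ [hd vs])" "b \<in> set (vs @ [hd vs])" "?EW a b"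
      then have "a \<in> set vs" "b \<in> set vs" using sv by auto
      then show "?EG a b" using lift ab(3) False nv by metis
    qed
    moreover have "set vs \<subseteq> verts G" using vs unfolding cyc_def by auto
    ultimately have "cyc G vs" using vs unfolding cyc_def by auto
    then show False using ac has_cycle_cyc by blast
  next
    case True
    then obtain ys where c: "cyc (contract G u v) (u # ys)" using cyc_start[OF vs] by blast
    have d: "distinct (u # ys)" "length ys \<ge> 2" "set (u#ys) \<subseteq> verts G - {v}"
      using c unfolding cyc_def by auto
    have s: "successively ?EW (u # ys @ [u])" using c unfolding cyc_def by simp
    have ne: "ys \<noteq> []" using d(2) by auto
    have s1: "?EW u (hd ys)" and s2: "successively ?EW ys" and s3: "?EW (last ys) u"
      using s ne by (auto simp: successively_Cons successively_append_iff)
    have ysn: "u \<notin> set ys" "v \<notin> set ys" "set ys \<subseteq> verts G" using d by auto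
    have sG: "successively ?EG ys"
    proof (rule successively_mono_set[OF s2])
      fix a b assume "a \<in> set ys" "b \<in> set ys" "?EW a b"
      then show "?EG a b" using lift ysn by metis
    qed
    have hy: "hd ys \<in> set ys" "last ys \<in> set ys" using ne by auto
    have h1: "?EG u (hd ys) \<or> ?EG v (hd ys)"
      using contract_edge_u[OF w uvE, of "hd ys"] s1 hy ysn by auto
    have h2: "?EG u (last ys) \<or> ?EG v (last ys)"
      using contract_edge_u[OF w uvE, of "last ys"] s3 hy ysn by (auto simp: insert_commute)
    have uvE': "?EG v u" using uvE by (simp add: insert_commute)
    have cG: "cyc G (u # ys) \<or> cyc G (v # ys) \<or> cyc G (u # ys @ [v]) \<or> cyc G (v # ys @ [u])"
    proof -
      have base: "length (u # ys) \<ge> 3" "distinct (u # ys)" "distinct (v # ys)"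
        "length (v # ys) \<ge> 3" "distinct (u # ys @ [v])" "distinct (v # ys @ [u])"
        "length (u # ys @ [v]) \<ge> 3" "length (v # ys @ [u]) \<ge> 3"
        using d ysn uv by auto
      have sets: "set (u # ys) \<subseteq> verts G" "set (v # ys) \<subseteq> verts G"
        "set (u # ys @ [v]) \<subseteq> verts G" "set (v # ys @ [u]) \<subseteq> verts G" using ysn uv by auto
      have E: "?EG a b \<Longrightarrow> ?EG b a" for a b by (simp add: insert_commute)
      consider "?EG u (hd ys)" "?EG u (last ys)" | "?EG v (hd ys)" "?EG v (last ys)"
        | "?EG u (hd ys)" "?EG v (last ys)" | "?EG v (hd ys)" "?EG u (last ys)"
        using h1 h2 by blast
      then show ?thesis
      proof cases
        case 1
        have "successively ?EG (u # ys @ [u])"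
          using 1 sG ne E by (auto simp: successively_Cons successively_append_iff)
        then show ?thesis using base sets unfolding cyc_def by simp
      next
        case 2
        have "successively ?EG (v # ys @ [v])"
          using 2 sG ne E by (auto simp: successively_Cons successively_append_iff)
        then show ?thesis using base sets unfolding cyc_def by simp
      next
        case 3
        have "successively ?EG (u # ys @ [v] @ [u])"
          using 3 sG ne E uvE' by (auto simp: successively_Cons successively_append_iff)
        then show ?thesis using base sets unfolding cyc_def by simp
      next
        case 4
        have "successively ?EG (v # ys @ [u] @ [v])"
          using 4 sG ne E uvE by (auto simp: successively_Cons successively_append_iff)
        then show ?thesis using base sets unfolding cyc_def by simp
      qed
    qed
    then show False using ac has_cycle_cyc by blast
  qed
qed



lemma contract_conn: assumes w: "wfe G" and uvE: "{u,v} \<in> edges G" and r: "(adj G)\<^sup>*\<^sup>* a b"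
  shows "(adj (contract G u v))\<^sup>*\<^sup>* (rr u v a) (rr u v b)"
  using r
proof (induction rule: rtranclp_induct)
  case base then show ?case by simp
next
  case (step b c)
  have e: "{b,c} \<in> edges G" using step(2) by (simp add: adj_def)
  show ?case
  proof (cases "{b,c} = {u,v}")
    case True
    then have "rr u v b = rr u v c" by (auto simp: doubleton_eq_iff rr_def)
    then show ?thesis using step(3) by simp
  next
    case False
    have "{rr u v b, rr u v c} \<in> edges (contract G u v)" by (rule cei2[OF e False refl refl])
    then have "adj (contract G u v) (rr u v b) (rr u v c)" by (simp add: adj_def)
    with step(3) show ?thesis by (rule rtranclp.rtrancl_into_rtrancl)
  qed
qed

lemma contract_forest: assumes G: "in_CX X G" and uvE: "{u,v} \<in> edges G"
  shows "is_X_forest X (contract G u v)"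
proof -
  have w: "wfe G" using cx_wfe[OF G] .
  have wf: "wf_graph X (contract G u v)" using wf_graph_contract[OF cx_wf[OF G] uvE] .
  have wW: "wfe (contract G u v)" using contract_wfe[OF w uvE] .
  have uv: "u \<noteq> v" "u \<in> verts G" "v \<in> verts G" using wfe_edge[OF w uvE] by auto
  have ac: "\<not> has_cycle (contract G u v)" using contract_acyclic[OF w uvE cx_acyc[OF G]] .
  have conn: "\<exists>x\<in>X. connected_in (contract G u v) y (lab (contract G u v) x)"
    if y: "y \<in> verts (contract G u v)" for y
  proof -
    have yG: "y \<in> verts G" "y \<noteq> v" using y by auto
    obtain x where x: "x \<in> X" "connected_in G y (lab G x)"
      using G yG(1) unfolding in_CX_def is_X_tree_def is_X_forest_def by blast
    have "(adj (contract G u v))\<^sup>*\<^sup>* (rr u v y) (rr u v (lab G x))"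
      using contract_conn[OF w uvE] x(2) unfolding connected_in_def by blast
    moreover have "rr u v y = y" using yG(2) by (simp add: rr_def)
    ultimately show ?thesis using x(1) unfolding connected_in_def contract_lab by auto
  qed
  have deg: "deg (contract G u v) y \<ge> 3"
    if y: "y \<in> verts (contract G u v)" "\<not> labeled X (contract G u v) y" for y
  proof -
    have l: "labs X (contract G u v) y = {}" using y(2) labeled_labs by blast
    have "card (nbrs (contract G u v) y) \<ge> 3"
    proof (cases "y = u")
      case True
      then have a: "labs X G u = {}" "labs X G v = {}" using l contract_labs_u[OF w uvE] by auto
      have "card (nbrs G u) = 3" "card (nbrs G v) = 3" using cx_deg_unlab[OF G] a uv by auto
      moreover note N = cx_nbrs_contract_u[OF G uvE]
      moreover have "finite (nbrs G u - {v})" "finite (nbrs G v - {u})" using nbrs_finite[OF w] by auto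
      ultimately have "card (nbrs (contract G u v) u) = 4" by (simp add: card_Un_disjoint)
      then show ?thesis using True by simp
    next
      case False
      then have yy: "y \<in> verts G" "y \<notin> {u,v}" using y by auto
      have "good X (contract G u v) y" using cx_good_contract[OF G uvE yy] .
      then show ?thesis using l unfolding good_def by auto
    qed
    then show ?thesis using deg_nbrs[OF wW] by simp
  qed
  show ?thesis unfolding is_X_forest_def using wf ac conn deg by blast
qed

lemma contract_nni_eq:
  assumes w: "wfe C" and uvE: "{u,v} \<in> edges C" and b: "{u,b} \<in> edges C" "b \<noteq> v"
    and c: "{v,c} \<in> edges C" "c \<noteq> u"
  shows "contract (nni_result C u v b c) u v = contract C u v"
proof -
  have f: "u \<noteq> v" "u \<noteq> b" "v \<noteq> c" using wfe_edge[OF w] uvE b c by blast+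
  let ?r = "\<lambda>e. rr u v ` e"
  define E0 where "E0 = edges C - {{u,v}} - {{u,b},{v,c}}"
  have n1: "{u,c} \<noteq> {u,v}" "{v,b} \<noteq> {u,v}" "{u,b} \<noteq> {u,v}" "{v,c} \<noteq> {u,v}"
    using f b(2) c(2) by (auto simp: doubleton_eq_iff)
  have eN: "edges (nni_result C u v b c) - {{u,v}} = E0 \<union> {{u,c},{v,b}}"
    using n1 unfolding nni_edges E0_def by auto
  have eC: "edges C - {{u,v}} = E0 \<union> {{u,b},{v,c}}"
    using n1 b(1) c(1) unfolding E0_def by auto
  have i1: "?r {u,c} = {u,c}" "?r {v,b} = {u,b}" "?r {u,b} = {u,b}" "?r {v,c} = {u,c}"
    using f b(2) c(2) by (auto simp: rr_def)
  have "?r ` (edges (nni_result C u v b c) - {{u,v}}) = ?r ` (edges C - {{u,v}})"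
    unfolding eN eC image_Un using i1 by (simp add: insert_commute)
  then show ?thesis unfolding contract_def nni_result_def verts_def edges_def lab_def Let_def rr_def
    by simp
qed



lemma delete_simps[simp]: "verts (delete G a b) = verts G" "edges (delete G a b) = edges G - {{a,b}}"
  "lab (delete G a b) = lab G"
  by (simp_all add: delete_def verts_def edges_def lab_def)

lemma wf_graph_delete: "wf_graph X G \<Longrightarrow> wf_graph X (delete G a b)"
  unfolding wf_graph_def by auto

lemma cx_safe_del: assumes C: "in_CX X C" and e: "{a,b} \<in> edges C" and s: "safe_deletion X C a b"
  shows "verts C = {a,b}" "edges C = {{a,b}}"
proof -
  have w: "wfe C" using cx_wfe[OF C] .
  have ab: "a \<in> verts C" "b \<in> verts C" "a \<noteq> b" using wfe_edge[OF w e] by auto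
  have la: "labs X C a \<noteq> {}"
  proof (rule ccontr)
    assume "\<not> labs X C a \<noteq> {}"
    then have "labs X C a = {}" by simp
    then have "deg C a = 3" using cx_deg_unlab[OF C ab(1)] deg_nbrs[OF w] by simp
    moreover have "\<not> labeled X C a" using \<open>labs X C a = {}\<close> labeled_labs by blast
    ultimately show False using s unfolding safe_deletion_def by simp
  qed
  have lb: "labs X C b \<noteq> {}"
  proof (rule ccontr)
    assume "\<not> labs X C b \<noteq> {}"
    then have "labs X C b = {}" by simp
    then have "deg C b = 3" using cx_deg_unlab[OF C ab(2)] deg_nbrs[OF w] by simp
    moreover have "\<not> labeled X C b" using \<open>labs X C b = {}\<close> labeled_labs by blast
    ultimately show False using s unfolding safe_deletion_def by simp
  qed
  have e': "{b,a} \<in> edges C" using e by (simp add: insert_commute)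
  have "nbrs C a = {b}" using cx_leaf_nbrs[OF C e la] .
  moreover have "nbrs C b = {a}" using cx_leaf_nbrs[OF C e' lb] .
  ultimately show V: "verts C = {a,b}" using cx_two[OF C e] by simp
  show "edges C = {{a,b}}"
  proof
    show "edges C \<subseteq> {{a,b}}"
    proof
      fix f assume f: "f \<in> edges C"
      then obtain x y where xy: "f = {x,y}" "x \<noteq> y" using wfe_edge_cases[OF w f] by blast
      then have "x \<in> verts C" "y \<in> verts C" using wfe_edge[OF w] f by blast+
      then show "f \<in> {{a,b}}" using xy V by auto
    qed
  qed (use e in simp)
qed

lemma cx_contract_noedge: assumes C: "in_CX X C" and e: "{a,b} \<in> edges C"
  and n: "edges (contract C a b) = {}" shows "verts C = {a,b}"
proof -
  have "nbrs (contract C a b) a = {}" using n by (simp add: nbrs_def)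
  then have N: "nbrs C a - {b} = {}" "nbrs C b - {a} = {}"
    using cx_nbrs_contract_u(1)[OF C e] by auto
  then have "nbrs C a \<subseteq> {b}" "nbrs C b \<subseteq> {a}" by auto
  then show ?thesis using cx_two[OF C e] by simp
qed

lemma iso_noedge: assumes "iso X G H" "edges H = {}" "wfe G" shows "edges G = {}"
proof (rule ccontr)
  assume "edges G \<noteq> {}"
  then obtain e where e: "e \<in> edges G" by blast
  obtain x y where xy: "e = {x,y}" using wfe_edge_cases[OF assms(3) e] by blast
  have "{x,y} \<in> edges G" using e xy by simp
  then have v: "x \<in> verts G" "y \<in> verts G" using wfe_edge[OF assms(3)] by blast+
  obtain f where f: "\<forall>u \<in> verts G. \<forall>v \<in> verts G. {u, v} \<in> edges G \<longleftrightarrow> {f u, f v} \<in> edges H"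
    using assms(1) unfolding iso_def by blast
  then show False using v \<open>{x,y} \<in> edges G\<close> assms(2) by blast
qed

lemma iso_card: assumes "iso X G H" shows "card (verts G) = card (verts H)"
proof -
  obtain f where "bij_betw f (verts G) (verts H)" using assms unfolding iso_def by blast
  then show ?thesis by (rule bij_betw_same_card)
qed

lemma del_contr_absurd:
  assumes A: "in_CX X A" and e: "{u,v} \<in> edges A" and s: "safe_deletion X A u v"
    and i1: "iso X w (delete A u v)" and B: "in_CX X B" and e2: "{p,q} \<in> edges B"
    and i2: "iso X w (contract B p q)" and ww: "wf_graph X w"
  shows False
proof -
  note AD = cx_safe_del[OF A e s]
  have uv: "u \<noteq> v" using wfe_edge[OF cx_wfe[OF A] e] by auto
  have pq: "p \<noteq> q" using wfe_edge[OF cx_wfe[OF B] e2] by auto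
  have "edges (delete A u v) = {}" using AD by simp
  then have ew: "edges w = {}" using iso_noedge[OF i1 _ wf_wfe[OF ww]] by blast
  have cw: "card (verts w) = 2" using iso_card[OF i1] AD uv by simp
  have wB: "wf_graph X (contract B p q)" using wf_graph_contract[OF cx_wf[OF B] e2] .
  have "iso X (contract B p q) w" using iso_sym[OF i2 ww wB] .
  then have "edges (contract B p q) = {}" using iso_noedge[OF _ ew wf_wfe[OF wB]] by blast
  then have "verts B = {p,q}" using cx_contract_noedge[OF B e2] by blast
  then have "card (verts (contract B p q)) = 1" using pq by simp
  then show False using iso_card[OF i2] cw by simp
qed

lemma del_del:
  assumes A: "in_CX X A" and e: "{u,v} \<in> edges A" and s: "safe_deletion X A u v"
    and i1: "iso X w (delete A u v)" and B: "in_CX X B" and e2: "{p,q} \<in> edges B"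
    and s2: "safe_deletion X B p q"
    and i2: "iso X w (delete B p q)" and ww: "wf_graph X w"
  shows "iso X A B"
proof -
  note AD = cx_safe_del[OF A e s] and BD = cx_safe_del[OF B e2 s2]
  have uv: "u \<noteq> v" using wfe_edge[OF cx_wfe[OF A] e] by auto
  have pq: "p \<noteq> q" using wfe_edge[OF cx_wfe[OF B] e2] by auto
  have wA: "wf_graph X (delete A u v)" using wf_graph_delete[OF cx_wf[OF A]] .
  have "iso X (delete A u v) (delete B p q)" using iso_trans[OF iso_sym[OF i1 ww wA] i2] .
  then obtain f where f: "bij_betw f (verts A) (verts B)" "\<forall>x \<in> X. f (lab A x) = lab B x"
    unfolding iso_def by auto
  have E: "{x,y} \<in> edges A \<longleftrightarrow> {f x, f y} \<in> edges B" if xy: "x \<in> verts A" "y \<in> verts A" for x y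
  proof -
    have fx: "f x \<in> verts B" "f y \<in> verts B" using f(1) xy by (meson bij_betwE)+
    have "{x,y} \<in> edges A \<longleftrightarrow> x \<noteq> y" using xy AD uv by (auto simp: doubleton_eq_iff)
    also have "\<dots> \<longleftrightarrow> f x \<noteq> f y" using f(1) xy unfolding bij_betw_def inj_on_def by blast
    also have "\<dots> \<longleftrightarrow> {f x, f y} \<in> edges B" using fx BD pq by (auto simp: doubleton_eq_iff)
    finally show ?thesis .
  qed
  show ?thesis unfolding iso_def using f E by blast
qed

theorem mainTheorem5:
  fixes X :: "'x set" and Ci Cj :: "'x lgraph"
  assumes "finite X"
    and "in_CX X Ci" and "in_CX X Cj"
    and "\<not> iso X Ci Cj"
  shows "(\<exists>w. is_X_forest X w \<and> covered_by X w Ci \<and> covered_by X w Cj) \<longleftrightarrow>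
         (\<exists>u v. nni_over X Ci u v Cj)"
proof
  assume "\<exists>w. is_X_forest X w \<and> covered_by X w Ci \<and> covered_by X w Cj"
  then obtain w where w: "is_X_forest X w" "covered_by X w Ci" "covered_by X w Cj" by blast
  have ww: "wf_graph X w" using w(1) unfolding is_X_forest_def by blast
  obtain u v where uv: "{u,v} \<in> edges Ci"
    "iso X w (contract Ci u v) \<or> (safe_deletion X Ci u v \<and> iso X w (delete Ci u v))"
    using w(2) unfolding covered_by_def by blast
  obtain p q where pq: "{p,q} \<in> edges Cj"
    "iso X w (contract Cj p q) \<or> (safe_deletion X Cj p q \<and> iso X w (delete Cj p q))"
    using w(3) unfolding covered_by_def by blast
  show "\<exists>u v. nni_over X Ci u v Cj"
  proof (cases "iso X w (contract Ci u v)")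
    case c1: True
    show ?thesis
    proof (cases "iso X w (contract Cj p q)")
      case c2: True
      have w1: "wf_graph X (contract Ci u v)" using wf_graph_contract[OF cx_wf[OF assms(2)] uv(1)] .
      have "iso X (contract Ci u v) (contract Cj p q)" using iso_trans[OF iso_sym[OF c1 ww w1] c2] .
      then have "nni_over X Ci u v Cj" using contr_contr[OF assms(2,3) uv(1) pq(1) _ assms(4)] by blast
      then show ?thesis by blast
    next
      case False
      then have "safe_deletion X Cj p q" "iso X w (delete Cj p q)" using pq(2) by auto
      then show ?thesis using del_contr_absurd[OF assms(3) pq(1) _ _ assms(2) uv(1) c1 ww] by blast
    qed
  next
    case False
    then have d1: "safe_deletion X Ci u v" "iso X w (delete Ci u v)" using uv(2) by auto
    show ?thesis
    proof (cases "iso X w (contract Cj p q)")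
      case c2: True
      then show ?thesis using del_contr_absurd[OF assms(2) uv(1) d1 assms(3) pq(1) c2 ww] by blast
    next
      case False
      then have "safe_deletion X Cj p q" "iso X w (delete Cj p q)" using pq(2) by auto
      then have "iso X Ci Cj" using del_del[OF assms(2) uv(1) d1 assms(3) pq(1) _ _ ww] by blast
      then show ?thesis using assms(4) by blast
    qed
  qed
next
  assume "\<exists>u v. nni_over X Ci u v Cj"
  then obtain u v b c where n: "{u,v} \<in> edges Ci" "{u,b} \<in> edges Ci" "b \<noteq> v" "{v,c} \<in> edges Ci"
    "c \<noteq> u" "iso X Cj (nni_result Ci u v b c)"
    unfolding nni_over_def by blast
  have wC: "wfe Ci" using cx_wfe[OF assms(2)] .
  note NF = nni_facts[OF wC n(1) n(2,3) n(4,5)]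
  define w where "w = contract Ci u v"
  have f: "is_X_forest X w" unfolding w_def using contract_forest[OF assms(2) n(1)] .
  have c1: "covered_by X w Ci" unfolding covered_by_def w_def using n(1) iso_refl by blast
  have wN: "wf_graph X (nni_result Ci u v b c)"
    using NF(1) cx_wf[OF assms(2)] unfolding wf_graph_def wfe_def by simp
  have "iso X (nni_result Ci u v b c) Cj" using iso_sym[OF n(6) cx_wf[OF assms(3)] wN] .
  then obtain c' d' where cd: "{c',d'} \<in> edges Cj"
    "iso X (contract (nni_result Ci u v b c) u v) (contract Cj c' d')"
    using iso_contract[OF _ wN cx_wf[OF assms(3)] NF(3)] by blast
  have "contract (nni_result Ci u v b c) u v = w"
    unfolding w_def using contract_nni_eq[OF wC n(1) n(2,3) n(4,5)] .
  then have c2: "covered_by X w Cj" using cd unfolding covered_by_def by auto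
  show "\<exists>w. is_X_forest X w \<and> covered_by X w Ci \<and> covered_by X w Cj" using f c1 c2 by blast
qed


end
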